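(* Let $n\ge \max\{m,p\}$ be positive integers, $A\in\mathbb{R}^{n\times n}$ and $E\in\mathbb{R}^{p\times p}$ symmetric positive definite, $B\in\mathbb{R}^{m\times n}$ of full row rank, $C\in\mathbb{R}^{p\times m}$ of full rank, $D\in\mathbb{R}^{m\times m}$ symmetric positive semidefinite, and $\widehat A,\widehat S,\widehat X$ symmetric positive definite of sizes $n,m,p$. Let $$\mathcal{A}=\begin{bmatrix}A&B^T&0\\ B&-D&C^T\\ 0&C&E\end{bmatrix},\qquad \mathcal{P}=\begin{bmatrix}\widehat A&B^T&0\\ 0&-\widehat S&C^T\\ 0&0&\widehat X\end{bmatrix}.$$ Set $\overline A=\widehat A^{-1/2}A\widehat A^{-1/2}$, $\overline D=\widehat S^{-1/2}D\widehat S^{-1/2}$, $\overline E=\widehat X^{-1/2}E\widehat X^{-1/2}$, $R=\widehat S^{-1/2}B\widehat A^{-1/2}$, $K=\widehat X^{-1/2}C\widehat S^{-1/2}$, $\widetilde S=D+B\widehat A^{-1}B^T$, $\widetilde X=E+C\widehat S^{-1}C^T$, and define $\gamma^A_{\min/\max}=\lambda_{\min/\max}(\widehat A^{-1}A)$, $\gamma^S_{\max}=\lambda_{\max}(\widehat S^{-1}\widetilde S)$, $\gamma^X_{\max}=\lambda_{\max}(\widehat X^{-1}\widetilde X)$, $\gamma^D_{\max}=\lambda_{\max}(\widehat S^{-1}D)$, $\gamma^E_{\min}=\lambda_{\min}(\widehat X^{-1}E)$, $\gamma^R_{\min}=\lambda_{\min}(RR^T)$. Assume $1\in[\gamma^A_{\min},\gamma^A_{\max}]$.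 Let $\lambda$ be a real eigenvalue of $\mathcal{A}\mathcal{P}^{-1}$ with $$\lambda\notin\left[\min\left\{\gamma^A_{\min},\frac{\gamma^R_{\min}}{\gamma^A_{\max}+\gamma^R_{\min}+\gamma^D_{\max}}\right\},\ \gamma^A_{\max}+\gamma^S_{\max}\right].$$ Then there are numbers $\gamma_A=q(\overline A,w_1)$, $\gamma_R=q(RR^T,w_2)$, $\gamma_D=q(\overline D,w_2)$, $\gamma_K=q(KK^T,w_3)$, $\gamma_E=q(\overline E,w_3)$ for some nonzero real vectors $w_1,w_2,w_3$ of appropriate sizes, such that, with $\gamma_S=\gamma_R+\gamma_D$ and $\gamma_X=\gamma_K+\gamma_E$, $\lambda$ satisfies $$\lambda^3-(\gamma_A+\gamma_S+\gamma_X)\lambda^2+(\gamma_A\gamma_X+\gamma_K+\gamma_E\gamma_S+\gamma_D\gamma_A+\gamma_R)\lambda-(\gamma_A\gamma_K+\gamma_E\gamma_A\gamma_D+\gamma_E\gamma_R)=0,$$ and moreover $$\min\left\{\gamma^E_{\min},\gamma^A_{\min},\frac{\gamma^R_{\min}}{\gamma^A_{\max}+\gamma^R_{\min}+\gamma^D_{\max}}\right\}\le\lambda\le\gamma^A_{\max}+\gamma^S_{\max}+\gamma^X_{\max}.$$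
   Context: For a square matrix $H$ and nonzero vector $w$, $q(H,w)=\frac{w^*Hw}{w^*w}$ is the Rayleigh quotient. $\lambda_{\min}$, $\lambda_{\max}$ denote smallest and largest eigenvalues. The assumption $1\in[\gamma^A_{\min},\gamma^A_{\max}]$ is a standing assumption of the paper's analysis. *)

theory Defs
  imports "HOL-Analysis.Analysis"
begin

text \<open>Matrices are HOL-Analysis matrices real^'c^'r (r rows, c columns); sizes are
  the cardinalities of the finite index types.\<close>

definition sym_mat :: "real^'n^'n \<Rightarrow> bool" where
  "sym_mat M \<longleftrightarrow> transpose M = M"

definition spd :: "real^'n^'n \<Rightarrow> bool" where
  "spd M \<longleftrightarrow> sym_mat M \<and> (\<forall>x. x \<noteq> 0 \<longrightarrow> x \<bullet> (M *v x) > 0)"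

definition spsd :: "real^'n^'n \<Rightarrow> bool" where
  "spsd M \<longleftrightarrow> sym_mat M \<and> (\<forall>x. x \<bullet> (M *v x) \<ge> 0)"

definition rq :: "real^'n^'n \<Rightarrow> real^'n \<Rightarrow> real" where
  "rq H w = (w \<bullet> (H *v w)) / (w \<bullet> w)"

definition real_eigs :: "real^'n^'n \<Rightarrow> real set" where
  "real_eigs M = {l. \<exists>v. v \<noteq> 0 \<and> M *v v = l *\<^sub>R v}"

definition lam_min :: "real^'n^'n \<Rightarrow> real" where
  "lam_min M = Min (real_eigs M)"

definition lam_max :: "real^'n^'n \<Rightarrow> real" where
  "lam_max M = Max (real_eigs M)"

definition inv_sqrt :: "real^'n^'n \<Rightarrow> real^'n^'n" where
  "inv_sqrt M = (THE S. spd S \<and> S ** S = matrix_inv M)"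

text \<open>3x3 block matrix; index type ('n + 'm) + 'p: Inl (Inl i) is the first block,
  Inl (Inr i) the second, Inr i the third.\<close>
definition block3 ::
  "real^'n^'n \<Rightarrow> real^'m^'n \<Rightarrow> real^'p^'n \<Rightarrow>
   real^'n^'m \<Rightarrow> real^'m^'m \<Rightarrow> real^'p^'m \<Rightarrow>
   real^'n^'p \<Rightarrow> real^'m^'p \<Rightarrow> real^'p^'p \<Rightarrow> real^(('n+'m)+'p)^(('n+'m)+'p)" where
  "block3 M11 M12 M13 M21 M22 M23 M31 M32 M33 =
     (\<chi> i j. case i of
        Inl (Inl a) \<Rightarrow> (case j of Inl (Inl b) \<Rightarrow> M11$a$b | Inl (Inr b) \<Rightarrow> M12$a$b | Inr b \<Rightarrow> M13$a$b)
      | Inl (Inr a) \<Rightarrow> (case j of Inl (Inl b) \<Rightarrow> M21$a$b | Inl (Inr b) \<Rightarrow> M22$a$b | Inr b \<Rightarrow> M23$a$b)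
      | Inr a \<Rightarrow> (case j of Inl (Inl b) \<Rightarrow> M31$a$b | Inl (Inr b) \<Rightarrow> M32$a$b | Inr b \<Rightarrow> M33$a$b))"

end

theory Submission
  imports Defs
begin


lemma sym_dot: "sym_mat M \<Longrightarrow> x \<bullet> (M *v y) = (M *v x) \<bullet> (y::real^'n)"
  unfolding sym_mat_def by (metis dot_lmul_matrix transpose_matrix_vector)

lemma quad_zero:
  fixes a b :: real
  assumes "\<And>t. a * t^2 + b * t \<ge> 0"
  shows "b = 0"
proof (rule ccontr)
  assume b: "b \<noteq> 0"
  define d where "d = 2 * (\<bar>a\<bar> + 1)"
  define t where "t = - b / d"
  have d: "d > 0" unfolding d_def by simp
  have "a * t^2 + b * t = (b^2 / d) * (a / d - 1)"
    unfolding t_def using d by (simp add: field_simps power2_eq_square)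
  moreover have "b^2 / d > 0" using b d by simp
  moreover have "a / d - 1 < 0" using d unfolding d_def by (simp add: field_simps; linarith)
  ultimately have "a * t^2 + b * t < 0" by (metis diff_less_0_iff_less mult_pos_neg)
  with assms[of t] show False by simp
qed

definition oe :: "real^'n^'n \<Rightarrow> (real^'n) set \<Rightarrow> bool" where
  "oe M Q \<longleftrightarrow> finite Q \<and> (\<forall>q\<in>Q. q \<bullet> q = 1) \<and> (\<forall>q\<in>Q. \<forall>q'\<in>Q. q \<noteq> q' \<longrightarrow> q \<bullet> q' = 0)
      \<and> (\<forall>q\<in>Q. M *v q = (q \<bullet> (M *v q)) *\<^sub>R q)"

lemma oe_coeff:
  assumes "oe M Q" "q0 \<in> Q"
  shows "q0 \<bullet> (\<Sum>q\<in>Q. f q *\<^sub>R q) = f q0"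
proof -
  have f: "finite Q" using assms unfolding oe_def by auto
  have "q0 \<bullet> (\<Sum>q\<in>Q. f q *\<^sub>R q) = (\<Sum>q\<in>Q. f q * (q0 \<bullet> q))"
    by (simp add: inner_sum_right)
  also have "\<dots> = f q0 * (q0 \<bullet> q0) + (\<Sum>q\<in>Q-{q0}. f q * (q0 \<bullet> q))"
    using f assms(2) by (simp add: sum.remove)
  also have "(\<Sum>q\<in>Q-{q0}. f q * (q0 \<bullet> q)) = 0"
    using assms unfolding oe_def by (intro sum.neutral) auto
  finally show ?thesis using assms unfolding oe_def by auto
qed

lemma exists_eig_in_sub:
  fixes M :: "real^'n^'n"
  assumes sym: "sym_mat M" and W: "subspace W" and inv: "\<And>x. x \<in> W \<Longrightarrow> M *v x \<in> W"
    and w: "w \<in> W" "w \<noteq> 0"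
  shows "\<exists>v\<in>W. v \<bullet> v = 1 \<and> M *v v = (v \<bullet> (M *v v)) *\<^sub>R v"
proof -
  let ?S = "W \<inter> sphere 0 1"
  have cS: "compact ?S" using closed_subspace[OF W] compact_sphere by (rule closed_Int_compact)
  have "w /\<^sub>R norm w \<in> ?S" using w W by (auto simp: subspace_scale)
  hence neS: "?S \<noteq> {}" by blast
  have cont: "continuous_on ?S (\<lambda>x. x \<bullet> (M *v x))"
    by (intro continuous_intros matrix_vector_mult_linear_continuous_on)
  obtain v where v: "v \<in> ?S" and vmin: "\<And>y. y \<in> ?S \<Longrightarrow> v \<bullet> (M *v v) \<le> y \<bullet> (M *v y)"
    using continuous_attains_inf[OF cS neS cont] by blast
  define mu where "mu = v \<bullet> (M *v v)"
  have vW: "v \<in> W" and vv: "v \<bullet> v = 1" using v by (auto simp: norm_eq_1)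
  have nonneg: "x \<bullet> (M *v x) - mu * (x \<bullet> x) \<ge> 0" if xW: "x \<in> W" for x
  proof (cases "x = 0")
    case True then show ?thesis by simp
  next
    case False
    define x' where "x' = x /\<^sub>R norm x"
    have "x' \<in> ?S" using False xW W unfolding x'_def by (auto simp: subspace_scale)
    hence "mu \<le> x' \<bullet> (M *v x')" using vmin unfolding mu_def by blast
    also have "x' \<bullet> (M *v x') = (x \<bullet> (M *v x)) / (norm x)^2"
      unfolding x'_def by (simp add: matrix_vector_mult_scaleR power2_eq_square field_simps)
    finally have "mu * (norm x)^2 \<le> x \<bullet> (M *v x)" using False by (simp add: field_simps)
    thus ?thesis by (simp add: power2_norm_eq_inner)
  qed
  have orth: "u \<bullet> (M *v v - mu *\<^sub>R v) = 0" if uW: "u \<in> W" for u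
  proof -
    have "(u \<bullet> (M *v u) - mu * (u \<bullet> u)) * t^2 + (2 * (u \<bullet> (M *v v - mu *\<^sub>R v))) * t \<ge> 0" for t
    proof -
      have "v + t *\<^sub>R u \<in> W" using vW uW W by (simp add: subspace_add subspace_scale)
      from nonneg[OF this] have "0 \<le> (v + t *\<^sub>R u) \<bullet> (M *v (v + t *\<^sub>R u)) - mu * ((v + t *\<^sub>R u) \<bullet> (v + t *\<^sub>R u))" .
      also have "\<dots> = (u \<bullet> (M *v u) - mu * (u \<bullet> u)) * t^2 + (2 * (u \<bullet> (M *v v - mu *\<^sub>R v))) * t
            + (v \<bullet> (M *v v) - mu * (v \<bullet> v))"
        using sym_dot[OF sym, of v u]
        by (simp add: matrix_vector_right_distrib matrix_vector_mult_scaleR inner_add_left inner_add_right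
            inner_diff_right algebra_simps power2_eq_square inner_commute)
      also have "v \<bullet> (M *v v) - mu * (v \<bullet> v) = 0" using vv mu_def by simp
      finally show ?thesis by simp
    qed
    from quad_zero[OF this] show ?thesis by simp
  qed
  have "M *v v - mu *\<^sub>R v \<in> W" using inv[OF vW] vW W by (simp add: subspace_diff subspace_scale)
  from orth[OF this] have "M *v v = mu *\<^sub>R v" by simp
  thus ?thesis using vW vv mu_def by blast
qed

lemma oe_independent:
  assumes "oe M Q" shows "independent Q"
proof (rule pairwise_orthogonal_independent)
  show "pairwise orthogonal Q" using assms unfolding oe_def pairwise_def orthogonal_def by auto
  show "0 \<notin> Q" using assms unfolding oe_def by force
qed

lemma oe_card: "oe M Q \<Longrightarrow> card Q \<le> DIM(real^'n)" for Q :: "(real^'n) set"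
  using independent_bound oe_independent by blast

lemma spectral:
  fixes M :: "real^'n^'n"
  assumes sym: "sym_mat M"
  shows "\<exists>Q. oe M Q \<and> (\<forall>x. x = (\<Sum>q\<in>Q. (q \<bullet> x) *\<^sub>R q))"
proof -
  define P where "P k \<longleftrightarrow> (\<exists>Q. oe M Q \<and> card Q = k)" for k
  have P0: "P 0" unfolding P_def by (rule exI[of _ "{}"]) (simp add: oe_def)
  have bnd: "\<And>y. P y \<Longrightarrow> y \<le> DIM(real^'n)" unfolding P_def using oe_card by blast
  define k where "k = Greatest P"
  have "P k" unfolding k_def using GreatestI_nat[of P 0 "DIM(real^'n)", OF P0 bnd] .
  then obtain Q where Q: "oe M Q" "card Q = k" unfolding P_def by blast
  have fin: "finite Q" using Q unfolding oe_def by auto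
  have spanQ: "span Q = UNIV"
  proof (rule ccontr)
    assume "span Q \<noteq> UNIV"
    then obtain a where a: "a \<noteq> 0" "\<forall>x\<in>span Q. a \<bullet> x = 0" using span_not_UNIV_orthogonal[of Q] by blast
    define W where "W = {y. \<forall>x\<in>Q. orthogonal x y}"
    have W: "subspace W" unfolding W_def by (rule subspace_orthogonal_to_vectors)
    have aW: "a \<in> W" using a span_superset unfolding W_def orthogonal_def by (auto simp: inner_commute dest: span_base)
    have inv: "M *v x \<in> W" if "x \<in> W" for x
    proof -
      have "q \<bullet> (M *v x) = 0" if q: "q \<in> Q" for q
      proof -
        have "q \<bullet> (M *v x) = (M *v q) \<bullet> x" by (rule sym_dot[OF sym])
        also have "\<dots> = (q \<bullet> (M *v q)) * (q \<bullet> x)" using Q(1) q unfolding oe_def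
          by (metis inner_scaleR_left)
        also have "q \<bullet> x = 0" using \<open>x \<in> W\<close> q unfolding W_def orthogonal_def by auto
        finally show ?thesis by simp
      qed
      thus ?thesis unfolding W_def orthogonal_def by auto
    qed
    obtain v where v: "v \<in> W" "v \<bullet> v = 1" "M *v v = (v \<bullet> (M *v v)) *\<^sub>R v"
      using exists_eig_in_sub[OF sym W inv aW a(1)] by blast
    have vQ: "v \<notin> Q" using v unfolding W_def orthogonal_def by auto
    have vo: "\<And>q. q \<in> Q \<Longrightarrow> q \<bullet> v = 0" using v(1) unfolding W_def orthogonal_def by blast
    have vo': "\<And>q. q \<in> Q \<Longrightarrow> v \<bullet> q = 0" using vo by (simp add: inner_commute)
    have "oe M (insert v Q)"
      using Q(1) v(2,3) fin vo vo' unfolding oe_def by blast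
    moreover have "card (insert v Q) = k + 1" using vQ fin Q(2) by simp
    ultimately have "P (k + 1)" unfolding P_def by blast
    have "k + 1 \<le> k" unfolding k_def using Greatest_le_nat[of P "k+1" "DIM(real^'n)", OF \<open>P (k+1)\<close> bnd] k_def by simp
    thus False by simp
  qed
  have "x = (\<Sum>q\<in>Q. (q \<bullet> x) *\<^sub>R q)" for x
  proof -
    define y where "y = x - (\<Sum>q\<in>Q. (q \<bullet> x) *\<^sub>R q)"
    have "orthogonal y q" if "q \<in> Q" for q
      using oe_coeff[OF Q(1) that, of "\<lambda>q. q \<bullet> x"] unfolding y_def orthogonal_def
      by (simp add: inner_diff_right inner_commute)
    hence "orthogonal y y" using orthogonal_to_span[of y Q y] spanQ by auto
    thus ?thesis unfolding y_def orthogonal_def by simp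
  qed
  thus ?thesis using Q by blast
qed



definition eb :: "real^'n^'n \<Rightarrow> (real^'n) set \<Rightarrow> bool" where
  "eb M Q \<longleftrightarrow> oe M Q \<and> (\<forall>x. x = (\<Sum>q\<in>Q. (q \<bullet> x) *\<^sub>R q))"

lemma spectral': "sym_mat M \<Longrightarrow> \<exists>Q. eb M Q"
  unfolding eb_def using spectral by blast

lemma mv_sum: "M *v (\<Sum>i\<in>S. f i) = (\<Sum>i\<in>S. M *v f i)"
  by (induct S rule: infinite_finite_induct) (simp_all add: matrix_vector_right_distrib)

lemma eb_apply:
  assumes "eb M Q"
  shows "M *v x = (\<Sum>q\<in>Q. ((q \<bullet> (M *v q)) * (q \<bullet> x)) *\<^sub>R q)"
proof -
  have e: "x = (\<Sum>q\<in>Q. (q \<bullet> x) *\<^sub>R q)" using assms unfolding eb_def by blast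
  have "M *v x = M *v (\<Sum>q\<in>Q. (q \<bullet> x) *\<^sub>R q)" by (subst e) (rule refl)
  also have "\<dots> = (\<Sum>q\<in>Q. M *v ((q \<bullet> x) *\<^sub>R q))" by (rule mv_sum)
  also have "\<dots> = (\<Sum>q\<in>Q. ((q \<bullet> (M *v q)) * (q \<bullet> x)) *\<^sub>R q)"
  proof (rule sum.cong[OF refl])
    fix q assume q: "q \<in> Q"
    have "M *v q = (q \<bullet> (M *v q)) *\<^sub>R q" using assms q unfolding eb_def oe_def by blast
    hence "M *v ((q \<bullet> x) *\<^sub>R q) = (q \<bullet> x) *\<^sub>R ((q \<bullet> (M *v q)) *\<^sub>R q)"
      by (simp add: matrix_vector_mult_scaleR)
    thus "M *v ((q \<bullet> x) *\<^sub>R q) = ((q \<bullet> (M *v q)) * (q \<bullet> x)) *\<^sub>R q" by (simp add: mult.commute)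
  qed
  finally show ?thesis .
qed

lemma eb_inner:
  assumes "eb M Q"
  shows "x \<bullet> y = (\<Sum>q\<in>Q. (q \<bullet> x) * (q \<bullet> y))"
proof -
  have "x \<bullet> y = (\<Sum>q\<in>Q. (q \<bullet> x) *\<^sub>R q) \<bullet> y" using assms unfolding eb_def by metis
  also have "\<dots> = (\<Sum>q\<in>Q. (q \<bullet> x) * (q \<bullet> y))" by (simp add: inner_sum_left)
  finally show ?thesis .
qed

lemma eb_coeffM:
  assumes "eb M Q" "q \<in> Q"
  shows "q \<bullet> (M *v x) = (q \<bullet> (M *v q)) * (q \<bullet> x)"
proof -
  have "q \<bullet> (M *v x) = q \<bullet> (\<Sum>q\<in>Q. ((q \<bullet> (M *v q)) * (q \<bullet> x)) *\<^sub>R q)"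
    by (rule arg_cong[OF eb_apply[OF assms(1)]])
  also have "\<dots> = (q \<bullet> (M *v q)) * (q \<bullet> x)"
    by (rule oe_coeff) (use assms in \<open>auto simp: eb_def\<close>)
  finally show ?thesis .
qed

lemma eb_quad:
  assumes "eb M Q"
  shows "x \<bullet> (M *v x) = (\<Sum>q\<in>Q. (q \<bullet> (M *v q)) * (q \<bullet> x)^2)"
proof -
  have "x \<bullet> (M *v x) = (\<Sum>q\<in>Q. (q \<bullet> x) * (q \<bullet> (M *v x)))" by (rule eb_inner[OF assms])
  also have "\<dots> = (\<Sum>q\<in>Q. (q \<bullet> (M *v q)) * (q \<bullet> x)^2)"
  proof (rule sum.cong[OF refl])
    fix q assume "q \<in> Q"
    from eb_coeffM[OF assms this, of x]
    show "(q \<bullet> x) * (q \<bullet> (M *v x)) = (q \<bullet> (M *v q)) * (q \<bullet> x)^2"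
      by (simp add: power2_eq_square)
  qed
  finally show ?thesis .
qed

lemma eb_nz:
  assumes "eb M Q" "x \<noteq> 0"
  shows "\<exists>q\<in>Q. q \<bullet> x \<noteq> 0"
proof (rule ccontr)
  assume "\<not> ?thesis"
  hence "(\<Sum>q\<in>Q. (q \<bullet> x) *\<^sub>R q) = 0" by simp
  thus False using assms unfolding eb_def by metis
qed

lemma ex_nz_vec: "\<exists>x::real^'n. x \<noteq> 0"
  by (rule exI[of _ "vec 1"]) (simp add: vec_eq_iff)

lemma eb_ne: "eb M Q \<Longrightarrow> Q \<noteq> {}"
  using ex_nz_vec eb_nz by blast

lemma eb_eigs:
  assumes sym: "sym_mat M" and Q: "eb M Q"
  shows "real_eigs M = (\<lambda>q. q \<bullet> (M *v q)) ` Q"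
proof
  show "real_eigs M \<subseteq> (\<lambda>q. q \<bullet> (M *v q)) ` Q"
  proof
    fix l assume "l \<in> real_eigs M"
    then obtain v where v: "v \<noteq> 0" "M *v v = l *\<^sub>R v" unfolding real_eigs_def by blast
    obtain q where q: "q \<in> Q" "q \<bullet> v \<noteq> 0" using eb_nz[OF Q v(1)] by blast
    have "(q \<bullet> (M *v q)) * (q \<bullet> v) = l * (q \<bullet> v)" using eb_coeffM[OF Q q(1), of v] v(2) by (auto simp add: inner_scaleR_right)
    hence "l = q \<bullet> (M *v q)" using q(2) by simp
    thus "l \<in> (\<lambda>q. q \<bullet> (M *v q)) ` Q" using q(1) by blast
  qed
next
  show "(\<lambda>q. q \<bullet> (M *v q)) ` Q \<subseteq> real_eigs M"
  proof
    fix l assume "l \<in> (\<lambda>q. q \<bullet> (M *v q)) ` Q"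
    then obtain q where q: "q \<in> Q" "l = q \<bullet> (M *v q)" by blast
    have "q \<noteq> 0" using Q q(1) unfolding eb_def oe_def by force
    moreover have "M *v q = l *\<^sub>R q" using Q q unfolding eb_def oe_def by blast
    ultimately show "l \<in> real_eigs M" unfolding real_eigs_def by blast
  qed
qed

lemma sym_eigs_fin:
  assumes "sym_mat M" shows "finite (real_eigs M)" "real_eigs M \<noteq> {}"
proof -
  obtain Q where Q: "eb M Q" using spectral'[OF assms] by blast
  have f: "finite Q" using Q unfolding eb_def oe_def by auto
  show "finite (real_eigs M)" using eb_eigs[OF assms Q] f by simp
  show "real_eigs M \<noteq> {}" using eb_eigs[OF assms Q] eb_ne[OF Q] by simp
qed

lemma eig_rq: "l \<in> real_eigs M \<Longrightarrow> \<exists>v. v \<noteq> 0 \<and> rq M v = l"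
  unfolding real_eigs_def rq_def by (auto simp: inner_scaleR_right)

lemma rq_bounds:
  assumes sym: "sym_mat M" and w: "w \<noteq> 0"
  shows "lam_min M \<le> rq M w" "rq M w \<le> lam_max M"
proof -
  obtain Q where Q: "eb M Q" using spectral'[OF sym] by blast
  have f: "finite Q" using Q unfolding eb_def oe_def by auto
  have fe: "finite (real_eigs M)" and ne: "real_eigs M \<noteq> {}" using sym_eigs_fin[OF sym] by auto
  have mu: "q \<bullet> (M *v q) \<in> real_eigs M" if "q \<in> Q" for q using eb_eigs[OF sym Q] that by blast
  have ww: "w \<bullet> w > 0" using w by simp
  have ww': "w \<bullet> w = (\<Sum>q\<in>Q. (q \<bullet> w)^2)" using eb_inner[OF Q, of w w] by (simp add: power2_eq_square)
  have "lam_min M * (w \<bullet> w) = (\<Sum>q\<in>Q. lam_min M * (q \<bullet> w)^2)" by (simp add: ww' sum_distrib_left)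
  also have "\<dots> \<le> (\<Sum>q\<in>Q. (q \<bullet> (M *v q)) * (q \<bullet> w)^2)"
    using mu fe unfolding lam_min_def by (intro sum_mono mult_right_mono) auto
  also have "\<dots> = w \<bullet> (M *v w)" by (rule eb_quad[OF Q, symmetric])
  finally show "lam_min M \<le> rq M w" unfolding rq_def using ww by (simp add: field_simps)
  have "w \<bullet> (M *v w) = (\<Sum>q\<in>Q. (q \<bullet> (M *v q)) * (q \<bullet> w)^2)" by (rule eb_quad[OF Q])
  also have "\<dots> \<le> (\<Sum>q\<in>Q. lam_max M * (q \<bullet> w)^2)"
    using mu fe unfolding lam_max_def by (intro sum_mono mult_right_mono) auto
  also have "\<dots> = lam_max M * (w \<bullet> w)" by (simp add: ww' sum_distrib_left)
  finally show "rq M w \<le> lam_max M" unfolding rq_def using ww by (simp add: field_simps)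
qed



lemma minv_both:
  assumes "invertible (A::real^'n^'m)"
  shows "A ** matrix_inv A = mat 1" "matrix_inv A ** A = mat 1"
proof -
  have "\<exists>A'::real^'m^'n. A ** A' = mat 1 \<and> A' ** A = mat 1" using assms unfolding invertible_def .
  hence "A ** matrix_inv A = mat 1 \<and> matrix_inv A ** A = mat 1"
    unfolding matrix_inv_def by (rule someI_ex)
  thus "A ** matrix_inv A = mat 1" "matrix_inv A ** A = mat 1" by auto
qed

lemma minv_unique:
  fixes A B :: "real^'n^'n"
  assumes "A ** B = mat 1"
  shows "matrix_inv A = B" "invertible A"
proof -
  have BA: "B ** A = mat 1" using assms matrix_left_right_inverse by blast
  show inv: "invertible A" unfolding invertible_def using assms BA by blast
  have "matrix_inv A = matrix_inv A ** (A ** B)" using assms by simp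
  also have "\<dots> = (matrix_inv A ** A) ** B" by (simp add: matrix_mul_assoc)
  also have "\<dots> = B" using minv_both(2)[OF inv] by simp
  finally show "matrix_inv A = B" .
qed

lemma minv_mv:
  assumes "invertible (A::real^'n^'n)"
  shows "A *v (matrix_inv A *v x) = x" "matrix_inv A *v (A *v x) = x"
  using minv_both[OF assms] by (simp_all add: matrix_vector_mul_assoc)

lemma inj_invertible:
  fixes A :: "real^'n^'n"
  assumes "\<And>x. A *v x = 0 \<Longrightarrow> x = 0"
  shows "invertible A"
proof -
  have "inj ((*v) A)"
  proof (rule injI)
    fix x y assume "A *v x = A *v y"
    hence "A *v (x - y) = 0" by (simp add: matrix_vector_mult_diff_distrib)
    hence "x - y = 0" by (rule assms)
    thus "x = y" by simp
  qed
  hence "\<exists>B. B ** A = mat 1" using matrix_left_invertible_injective by blast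
  thus ?thesis using invertible_left_inverse by blast
qed

lemma sym_matI:
  fixes M :: "real^'n^'n"
  assumes "\<And>x y. x \<bullet> (M *v y) = (M *v x) \<bullet> y"
  shows "sym_mat M"
proof -
  have "transpose M *v x = M *v x" for x
  proof -
    have "(transpose M *v x) \<bullet> y = (M *v x) \<bullet> y" for y
      using assms[of x y] by (metis dot_lmul_matrix transpose_matrix_vector)
    thus ?thesis using vector_eq_rdot by blast
  qed
  thus ?thesis unfolding sym_mat_def using matrix_eq by blast
qed

lemma spd_sym: "spd M \<Longrightarrow> sym_mat M" unfolding spd_def by auto
lemma spd_pos: "spd M \<Longrightarrow> x \<noteq> 0 \<Longrightarrow> x \<bullet> (M *v x) > 0" unfolding spd_def by auto
lemma spd_nonneg: "spd M \<Longrightarrow> x \<bullet> (M *v x) \<ge> 0"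
  using spd_pos[of M x] by (cases "x = 0") auto

lemma spd_invertible:
  fixes M :: "real^'n^'n"
  assumes "spd M" shows "invertible M"
proof (rule inj_invertible)
  fix x assume "M *v x = 0"
  hence "x \<bullet> (M *v x) = 0" by simp
  thus "x = 0" using spd_pos[OF assms, of x] by fastforce
qed

lemma eb_mu_rq: "eb M Q \<Longrightarrow> q \<in> Q \<Longrightarrow> q \<bullet> (M *v q) = rq M q"
  unfolding eb_def oe_def rq_def by auto

lemma eb_q_nz: "eb M Q \<Longrightarrow> q \<in> Q \<Longrightarrow> q \<noteq> 0"
  unfolding eb_def oe_def by force

lemma eb_spd_mu: "spd M \<Longrightarrow> eb M Q \<Longrightarrow> q \<in> Q \<Longrightarrow> q \<bullet> (M *v q) > 0"
  using spd_pos eb_q_nz by blast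

lemma eb_inv_apply:
  fixes M :: "real^'n^'n"
  assumes M: "spd M" and Q: "eb M Q"
  shows "matrix_inv M *v x = (\<Sum>q\<in>Q. ((q \<bullet> x) / (q \<bullet> (M *v q))) *\<^sub>R q)"
proof -
  define y where "y = (\<Sum>q\<in>Q. ((q \<bullet> x) / (q \<bullet> (M *v q))) *\<^sub>R q)"
  have oe: "oe M Q" using Q unfolding eb_def by auto
  have "M *v y = (\<Sum>q\<in>Q. ((q \<bullet> (M *v q)) * (q \<bullet> y)) *\<^sub>R q)" by (rule eb_apply[OF Q])
  also have "\<dots> = (\<Sum>q\<in>Q. (q \<bullet> x) *\<^sub>R q)"
  proof (rule sum.cong[OF refl])
    fix q assume q: "q \<in> Q"
    have "q \<bullet> y = (q \<bullet> x) / (q \<bullet> (M *v q))" unfolding y_def by (rule oe_coeff[OF oe q])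
    thus "((q \<bullet> (M *v q)) * (q \<bullet> y)) *\<^sub>R q = (q \<bullet> x) *\<^sub>R q"
      using eb_spd_mu[OF M Q q] by simp
  qed
  also have "\<dots> = x" using Q unfolding eb_def by metis
  finally have "M *v y = x" .
  hence "matrix_inv M *v x = y" using minv_mv[OF spd_invertible[OF M]] by metis
  thus ?thesis unfolding y_def .
qed

lemma inv_quad:
  fixes M :: "real^'n^'n"
  assumes M: "spd M" and Q: "eb M Q"
  shows "v \<bullet> (matrix_inv M *v v) = (\<Sum>q\<in>Q. (q \<bullet> v)^2 / (q \<bullet> (M *v q)))"
proof -
  have oe: "oe M Q" using Q unfolding eb_def by auto
  have "v \<bullet> (matrix_inv M *v v) = (\<Sum>q\<in>Q. (q \<bullet> v) * (q \<bullet> (matrix_inv M *v v)))" by (rule eb_inner[OF Q])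
  also have "\<dots> = (\<Sum>q\<in>Q. (q \<bullet> v)^2 / (q \<bullet> (M *v q)))"
  proof (rule sum.cong[OF refl])
    fix q assume q: "q \<in> Q"
    have "q \<bullet> (matrix_inv M *v v) = (q \<bullet> v) / (q \<bullet> (M *v q))"
      unfolding eb_inv_apply[OF M Q] by (rule oe_coeff[OF oe q])
    thus "(q \<bullet> v) * (q \<bullet> (matrix_inv M *v v)) = (q \<bullet> v)^2 / (q \<bullet> (M *v q))"
      by (simp add: power2_eq_square)
  qed
  finally show ?thesis .
qed

lemma inv_quad_upper:
  fixes M :: "real^'n^'n"
  assumes M: "spd M" and c: "c > 0" and lb: "\<And>w. w \<noteq> 0 \<Longrightarrow> c \<le> rq M w"
  shows "v \<bullet> (matrix_inv M *v v) \<le> (v \<bullet> v) / c"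
proof -
  obtain Q where Q: "eb M Q" using spectral'[OF spd_sym[OF M]] by blast
  have "v \<bullet> (matrix_inv M *v v) = (\<Sum>q\<in>Q. (q \<bullet> v)^2 / (q \<bullet> (M *v q)))" by (rule inv_quad[OF M Q])
  also have "\<dots> \<le> (\<Sum>q\<in>Q. (q \<bullet> v)^2 / c)"
  proof (rule sum_mono)
    fix q assume q: "q \<in> Q"
    have "c \<le> q \<bullet> (M *v q)" using lb[OF eb_q_nz[OF Q q]] eb_mu_rq[OF Q q] by simp
    thus "(q \<bullet> v)^2 / (q \<bullet> (M *v q)) \<le> (q \<bullet> v)^2 / c" using c by (intro divide_left_mono) auto
  qed
  also have "\<dots> = (v \<bullet> v) / c" using eb_inner[OF Q, of v v] by (simp add: sum_divide_distrib power2_eq_square)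
  finally show ?thesis .
qed

lemma inv_quad_lower:
  fixes M :: "real^'n^'n"
  assumes M: "spd M" and c: "c > 0" and ub: "\<And>w. w \<noteq> 0 \<Longrightarrow> rq M w \<le> c"
  shows "(v \<bullet> v) / c \<le> v \<bullet> (matrix_inv M *v v)"
proof -
  obtain Q where Q: "eb M Q" using spectral'[OF spd_sym[OF M]] by blast
  have "(v \<bullet> v) / c = (\<Sum>q\<in>Q. (q \<bullet> v)^2 / c)" using eb_inner[OF Q, of v v] by (simp add: sum_divide_distrib power2_eq_square)
  also have "\<dots> \<le> (\<Sum>q\<in>Q. (q \<bullet> v)^2 / (q \<bullet> (M *v q)))"
  proof (rule sum_mono)
    fix q assume q: "q \<in> Q"
    have "q \<bullet> (M *v q) \<le> c" using ub[OF eb_q_nz[OF Q q]] eb_mu_rq[OF Q q] by simp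
    thus "(q \<bullet> v)^2 / c \<le> (q \<bullet> v)^2 / (q \<bullet> (M *v q))" using eb_spd_mu[OF M Q q] by (intro divide_left_mono) auto
  qed
  also have "\<dots> = v \<bullet> (matrix_inv M *v v)" by (rule inv_quad[OF M Q, symmetric])
  finally show ?thesis .
qed



lemma sqrt_exists_unique:
  fixes M :: "real^'n^'n"
  assumes M: "spd M"
  shows "\<exists>!S. spd S \<and> S ** S = matrix_inv M"
proof -
  obtain Q where Q: "eb M Q" using spectral'[OF spd_sym[OF M]] by blast
  have oe: "oe M Q" and fin: "finite Q" using Q unfolding eb_def oe_def by auto
  have expand: "\<And>x. x = (\<Sum>q\<in>Q. (q \<bullet> x) *\<^sub>R q)" using Q unfolding eb_def by blast
  define mu where "mu q = q \<bullet> (M *v q)" for q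
  have mupos: "q \<in> Q \<Longrightarrow> mu q > 0" for q unfolding mu_def using eb_spd_mu[OF M Q] by blast
  define c where "c q = 1 / sqrt (mu q)" for q
  have cpos: "q \<in> Q \<Longrightarrow> c q > 0" for q unfolding c_def using mupos by simp
  have c2: "q \<in> Q \<Longrightarrow> c q * c q = 1 / mu q" for q unfolding c_def using mupos[of q]
    by (simp add: real_sqrt_mult[symmetric])
  define f where "f x = (\<Sum>q\<in>Q. (c q * (q \<bullet> x)) *\<^sub>R q)" for x
  have lin: "linear f"
  proof (rule linearI)
    fix x y show "f (x + y) = f x + f y" unfolding f_def
      by (simp add: inner_add_right distrib_left scaleR_add_left sum.distrib)
  next
    fix r x show "f (r *\<^sub>R x) = r *\<^sub>R f x" unfolding f_def
      by (simp add: scaleR_sum_right mult.left_commute)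
  qed
  define S where "S = matrix f"
  have Sx: "S *v x = f x" for x unfolding S_def using matrix_vector_mul(2)[OF lin] by metis
  have qS: "q \<bullet> (S *v x) = c q * (q \<bullet> x)" if "q \<in> Q" for q x
    unfolding Sx f_def by (rule oe_coeff[OF oe that])
  have xS: "x \<bullet> (S *v y) = (\<Sum>q\<in>Q. c q * (q \<bullet> x) * (q \<bullet> y))" for x y
    unfolding Sx f_def by (simp add: inner_sum_right inner_commute[of x] mult.commute mult.left_commute)
  have symS: "sym_mat S"
    by (rule sym_matI) (simp add: xS inner_commute[of "S *v _"] mult.commute mult.left_commute)
  have posS: "x \<bullet> (S *v x) > 0" if xnz: "x \<noteq> 0" for x
  proof -
    obtain q0 where q0: "q0 \<in> Q" "q0 \<bullet> x \<noteq> 0" using eb_nz[OF Q xnz] by blast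
    have "0 < c q0 * ((q0 \<bullet> x) * (q0 \<bullet> x))" using cpos[OF q0(1)] q0(2) not_real_square_gt_zero mult_pos_pos by metis
    also have "\<dots> \<le> (\<Sum>q\<in>Q. c q * ((q \<bullet> x) * (q \<bullet> x)))"
    proof (rule member_le_sum[OF q0(1) _ fin])
      fix q assume "q \<in> Q - {q0}"
      hence "0 < c q" using cpos by blast
      thus "0 \<le> c q * ((q \<bullet> x) * (q \<bullet> x))" by (metis less_imp_le mult_nonneg_nonneg zero_le_square)
    qed
    finally show ?thesis by (simp add: xS mult.assoc)
  qed
  have spdS: "spd S" unfolding spd_def using symS posS by blast
  have "M *v ((S ** S) *v x) = x" for x
  proof -
    have "M *v ((S ** S) *v x) = M *v (S *v (S *v x))" by (simp add: matrix_vector_mul_assoc)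
    also have "\<dots> = (\<Sum>q\<in>Q. ((q \<bullet> (M *v q)) * (q \<bullet> (S *v (S *v x)))) *\<^sub>R q)"
      by (rule eb_apply[OF Q])
    also have "\<dots> = (\<Sum>q\<in>Q. (q \<bullet> x) *\<^sub>R q)"
    proof (rule sum.cong[OF refl])
      fix q assume q: "q \<in> Q"
      have "(q \<bullet> (M *v q)) * (q \<bullet> (S *v (S *v x))) = mu q * (c q * c q) * (q \<bullet> x)"
        unfolding mu_def qS[OF q] by (simp add: mult.assoc)
      also have "\<dots> = q \<bullet> x" using c2[OF q] mupos[OF q] by simp
      finally show "((q \<bullet> (M *v q)) * (q \<bullet> (S *v (S *v x)))) *\<^sub>R q = (q \<bullet> x) *\<^sub>R q" by simp
    qed
    also have "\<dots> = x" using expand by metis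
    finally show ?thesis .
  qed
  hence "M ** (S ** S) = mat 1" by (simp add: matrix_eq matrix_vector_mul_assoc[symmetric])
  hence SS: "S ** S = matrix_inv M" using minv_unique by metis
  show ?thesis
  proof (rule ex1I[of _ S])
    show "spd S \<and> S ** S = matrix_inv M" using spdS SS by blast
  next
    fix T assume T: "spd T \<and> T ** T = matrix_inv M"
    have Tq: "T *v q = c q *\<^sub>R q" if q: "q \<in> Q" for q
    proof -
      have Mq: "M *v q = mu q *\<^sub>R q" using oe q unfolding oe_def mu_def by blast
      have "q = matrix_inv M *v (M *v q)" using minv_mv[OF spd_invertible[OF M]] by simp
      also have "\<dots> = mu q *\<^sub>R (matrix_inv M *v q)" by (simp add: Mq matrix_vector_mult_scaleR)
      finally have iq: "matrix_inv M *v q = (1 / mu q) *\<^sub>R q" using mupos[OF q]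
        by (metis (no_types, lifting) divide_inverse_commute mult.right_neutral
            nonzero_eq_divide_eq order_less_irrefl scaleR_scaleR scaleR_one)
      define r where "r = T *v q - c q *\<^sub>R q"
      have "T *v (T *v q) = (1 / mu q) *\<^sub>R q"
        using T iq by (simp add: matrix_vector_mul_assoc)
      hence "T *v r + c q *\<^sub>R r = 0"
        unfolding r_def using c2[OF q]
        by (simp add: matrix_vector_mult_diff_distrib matrix_vector_mult_scaleR algebra_simps)
      hence "r \<bullet> (T *v r) + c q * (r \<bullet> r) = 0"
        by (metis inner_add_right inner_scaleR_right inner_zero_right)
      moreover have "r \<bullet> (T *v r) \<ge> 0" using spd_nonneg T by blast
      moreover have "r \<bullet> r \<ge> 0" by simp
      ultimately have "c q * (r \<bullet> r) = 0" using cpos[OF q]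
        by (smt (verit) mult_nonneg_nonneg)
      hence "r = 0" using cpos[OF q] by simp
      thus ?thesis unfolding r_def by simp
    qed
    have "T *v x = S *v x" for x
    proof -
      have "T *v x = T *v (\<Sum>q\<in>Q. (q \<bullet> x) *\<^sub>R q)" using expand by metis
      also have "\<dots> = (\<Sum>q\<in>Q. (q \<bullet> x) *\<^sub>R (T *v q))" by (simp add: mv_sum matrix_vector_mult_scaleR)
      also have "\<dots> = f x" unfolding f_def by (intro sum.cong refl) (simp add: Tq mult.commute)
      finally show ?thesis by (simp add: Sx)
    qed
    thus "T = S" using matrix_eq by blast
  qed
qed

lemma inv_sqrt:
  fixes M :: "real^'n^'n"
  assumes "spd M"
  shows "spd (inv_sqrt M)" "inv_sqrt M ** inv_sqrt M = matrix_inv M"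
  using theI'[OF sqrt_exists_unique[OF assms]] unfolding inv_sqrt_def by auto

lemma inv_sqrt_props:
  fixes M :: "real^'n^'n"
  assumes M: "spd M"
  defines "S \<equiv> inv_sqrt M"
  shows "spd S" "sym_mat S" "invertible S" "S ** S = matrix_inv M"
    "S ** M ** S = mat 1" "S ** S ** M = mat 1" "M ** (S ** S) = mat 1"
proof -
  show S: "spd S" "S ** S = matrix_inv M" using inv_sqrt[OF M] unfolding S_def by auto
  show "sym_mat S" using spd_sym S by blast
  show Si: "invertible S" using spd_invertible S by blast
  show MSS: "M ** (S ** S) = mat 1" using S minv_both[OF spd_invertible[OF M]] by simp
  show SSM: "S ** S ** M = mat 1" using MSS matrix_left_right_inverse by blast
  have "S ** M = matrix_inv S"
  proof -
    have "matrix_inv S = matrix_inv S ** (S ** S ** M)" using SSM by simp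
    also have "\<dots> = (matrix_inv S ** S) ** (S ** M)" by (simp add: matrix_mul_assoc)
    also have "\<dots> = S ** M" using minv_both(2)[OF Si] by simp
    finally show ?thesis by simp
  qed
  thus "S ** M ** S = mat 1" using minv_both(2)[OF Si] by simp
qed

lemma recip_rq:
  fixes N :: "real^'n^'n"
  assumes N: "spd N" and u: "u \<noteq> 0"
  shows "\<exists>w. w \<noteq> 0 \<and> rq N w = (u \<bullet> u) / (u \<bullet> (matrix_inv N *v u))"
proof -
  define S where "S = inv_sqrt N"
  note P = inv_sqrt_props[OF N, folded S_def]
  define w where "w = S *v u"
  have "w \<noteq> 0"
  proof
    assume "w = 0"
    hence "matrix_inv S *v w = 0" by simp
    thus False using minv_mv(2)[OF P(3), of u] u unfolding w_def by simp
  qed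
  moreover have "w \<bullet> (N *v w) = u \<bullet> u"
  proof -
    have "w \<bullet> (N *v w) = u \<bullet> (S *v (N *v (S *v u)))" unfolding w_def using sym_dot[OF P(2)] by metis
    also have "\<dots> = u \<bullet> ((S ** N ** S) *v u)" by (simp add: matrix_vector_mul_assoc matrix_mul_assoc)
    finally show ?thesis using P(5) by simp
  qed
  moreover have "w \<bullet> w = u \<bullet> (matrix_inv N *v u)"
  proof -
    have "w \<bullet> w = u \<bullet> (S *v (S *v u))" unfolding w_def using sym_dot[OF P(2)] by metis
    also have "\<dots> = u \<bullet> ((S ** S) *v u)" by (simp add: matrix_vector_mul_assoc)
    finally show ?thesis using P(4) by simp
  qed
  ultimately show ?thesis unfolding rq_def by metis
qed



lemma spd_mv_zero: "spd M \<Longrightarrow> M *v x = 0 \<Longrightarrow> x = 0"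
  using spd_pos[of M x] by fastforce

lemma neg_mv: "(- (A::real^'n^'m)) *v x = - (A *v x)"
  by (simp add: matrix_vector_mult_def vec_eq_iff sum_negf)

lemma mv_neg: "(A::real^'n^'m) *v (- x) = - (A *v x)"
  by (simp add: matrix_vector_mult_def vec_eq_iff sum_negf)

lemma neg_mm: "(- (A::real^'n^'m)) ** (- (B::real^'k^'n)) = A ** B"
  by (simp add: matrix_eq neg_mv matrix_vector_mul_assoc[symmetric] mv_neg)

lemma neg_spd:
  fixes T :: "real^'n^'n"
  assumes "sym_mat T" "\<And>w. w \<noteq> 0 \<Longrightarrow> w \<bullet> (T *v w) < 0"
  shows "spd (- T)"
  unfolding spd_def
proof safe
  show "sym_mat (- T)"
    by (rule sym_matI) (simp add: neg_mv sym_dot[OF assms(1)])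
  fix x :: "real^'n" assume "x \<noteq> 0"
  thus "0 < x \<bullet> (- T *v x)" using assms(2)[of x] by (simp add: neg_mv)
qed

lemma minv_neg:
  fixes T :: "real^'n^'n"
  assumes "invertible T"
  shows "matrix_inv (- T) = - matrix_inv T"
proof (rule minv_unique)
  show "- T ** - matrix_inv T = mat 1"
    using minv_both(1)[OF assms] by (simp add: neg_mm)
qed

lemma definite_recip:
  fixes T :: "real^'n^'n"
  assumes sym: "sym_mat T"
    and def: "(\<forall>w. w \<noteq> 0 \<longrightarrow> w \<bullet> (T *v w) > 0) \<or> (\<forall>w. w \<noteq> 0 \<longrightarrow> w \<bullet> (T *v w) < 0)"
  shows "invertible T"
    and "u \<noteq> 0 \<Longrightarrow> \<exists>w. w \<noteq> 0 \<and> rq T w * (u \<bullet> (matrix_inv T *v u)) = u \<bullet> u"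
    and "u \<noteq> 0 \<Longrightarrow> u \<bullet> (matrix_inv T *v u) \<noteq> 0"
proof -
  have invT: "invertible T"
  proof (rule inj_invertible)
    fix x assume "T *v x = 0"
    hence "x \<bullet> (T *v x) = 0" by simp
    thus "x = 0" using def by force
  qed
  thus "invertible T" .
  have nz: "u \<bullet> (matrix_inv T *v u) \<noteq> 0" if u: "u \<noteq> 0"
  proof -
    define y where "y = matrix_inv T *v u"
    have Ty: "T *v y = u" unfolding y_def using minv_mv[OF invT] by simp
    hence "y \<noteq> 0" using u by auto
    hence "y \<bullet> (T *v y) \<noteq> 0" using def by force
    thus ?thesis using Ty unfolding y_def by (simp add: inner_commute)
  qed
  thus "u \<noteq> 0 \<Longrightarrow> u \<bullet> (matrix_inv T *v u) \<noteq> 0" by blast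
  show "\<exists>w. w \<noteq> 0 \<and> rq T w * (u \<bullet> (matrix_inv T *v u)) = u \<bullet> u" if u: "u \<noteq> 0"
  proof (cases "\<forall>w. w \<noteq> 0 \<longrightarrow> w \<bullet> (T *v w) > 0")
    case True
    hence "spd T" using sym unfolding spd_def by blast
    from recip_rq[OF this u] obtain w where "w \<noteq> 0" "rq T w = (u \<bullet> u) / (u \<bullet> (matrix_inv T *v u))" by blast
    thus ?thesis using nz[OF u] by auto
  next
    case False
    hence neg: "\<And>w. w \<noteq> 0 \<Longrightarrow> w \<bullet> (T *v w) < 0" using def by blast
    have N: "spd (- T)" by (rule neg_spd[OF sym neg])
    from recip_rq[OF N u] obtain w where w: "w \<noteq> 0"
      "rq (- T) w = (u \<bullet> u) / (u \<bullet> (matrix_inv (- T) *v u))" by blast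
    have "rq (- T) w = - rq T w" unfolding rq_def by (simp add: neg_mv)
    moreover have "u \<bullet> (matrix_inv (- T) *v u) = - (u \<bullet> (matrix_inv T *v u))"
      by (simp add: minv_neg[OF invT] neg_mv)
    ultimately have "rq T w = (u \<bullet> u) / (u \<bullet> (matrix_inv T *v u))" using w(2) by simp
    thus ?thesis using nz[OF u] w(1) by auto
  qed
qed

lemma hi_ineq:
  fixes l a gR gD s :: real
  assumes "l > a + s" "gR + gD \<le> s" "a \<ge> 1" "gR \<ge> 0" "gD \<ge> 0"
  shows "l - gD - (l - 1) * gR / (l - a) > 0"
proof -
  have la: "l - a > 0" using assms by linarith
  have "(l - gD) * (l - a) - (l - 1) * gR = l * (l - a - gD - gR) + gD * a + gR"
    by (simp add: algebra_simps)
  also have "\<dots> > 0"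
  proof -
    have "l * (l - a - gD - gR) > 0" using assms by (intro mult_pos_pos) linarith+
    moreover have "gD * a \<ge> 0" using assms by simp
    ultimately show ?thesis using assms by linarith
  qed
  finally have "(l - gD) * (l - a) - (l - 1) * gR > 0" .
  hence "((l - gD) * (l - a) - (l - 1) * gR) / (l - a) > 0" using la by simp
  also have "((l - gD) * (l - a) - (l - 1) * gR) / (l - a) = l - gD - (l - 1) * gR / (l - a)"
    using la by (simp add: field_simps)
  finally show ?thesis .
qed

lemma lo_ineq:
  fixes l a rmin dmax gR gD :: real
  assumes "l < rmin / (a + rmin + dmax)" "l < a" "a \<ge> 1" "gR \<ge> rmin" "rmin > 0" "gD \<ge> 0" "gD \<le> dmax"
  shows "l - gD - (1 - l) * gR / (a - l) < 0"
proof -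
  have al: "a - l > 0" using assms by linarith
  have key: "l * (a + gD + gR) - l^2 - gD * a - gR < 0"
  proof (cases "l \<le> 0")
    case True
    have "l * (a + gD + gR) \<le> 0" using True assms by (intro mult_nonpos_nonneg) linarith+
    moreover have "gD * a \<ge> 0" using assms by simp
    moreover have "l^2 \<ge> 0" by simp
    ultimately show ?thesis using assms by linarith
  next
    case False
    have pos1: "a + rmin + dmax > 0" "a + gD + gR > 0" using assms by linarith+
    have "rmin * (a + gD + gR) \<le> gR * (a + rmin + dmax)"
    proof -
      have "rmin * a \<le> gR * a" using assms by (intro mult_right_mono) linarith+
      moreover have "rmin * gD \<le> gR * dmax" using assms by (intro mult_mono) linarith+
      ultimately show ?thesis by (simp add: algebra_simps)
    qed
    hence "rmin / (a + rmin + dmax) \<le> gR / (a + gD + gR)" using pos1 by (simp add: field_simps)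
    hence "l < gR / (a + gD + gR)" using assms by linarith
    hence "l * (a + gD + gR) < gR" using pos1 by (simp add: field_simps)
    moreover have "gD * a \<ge> 0" using assms by simp
    moreover have "l^2 \<ge> 0" by simp
    ultimately show ?thesis by linarith
  qed
  have "(l - gD) * (a - l) - (1 - l) * gR = l * (a + gD + gR) - l^2 - gD * a - gR"
    by (simp add: algebra_simps power2_eq_square)
  hence "((l - gD) * (a - l) - (1 - l) * gR) / (a - l) < 0" using key al by (simp add: divide_neg_pos)
  also have "((l - gD) * (a - l) - (1 - l) * gR) / (a - l) = l - gD - (1 - l) * gR / (a - l)"
    using al by (simp add: field_simps)
  finally show ?thesis .
qed

lemma cubic_upper:
  fixes l gA gR gD gK gE :: real
  assumes pos: "gA > 0" "gR \<ge> 0" "gD \<ge> 0" "gK \<ge> 0" "gE > 0"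
    and eq: "l ^ 3 - (gA + (gR + gD) + (gK + gE)) * l ^ 2
               + (gA * (gK + gE) + gK + gE * (gR + gD) + gD * gA + gR) * l
               - (gA * gK + gE * gA * gD + gE * gR) = 0"
  shows "l \<le> gA + (gR + gD) + (gK + gE)"
proof (rule ccontr)
  define s where "s = gA + (gR + gD) + (gK + gE)"
  define c1 where "c1 = gA * (gK + gE) + gK + gE * (gR + gD) + gD * gA + gR"
  define c0 where "c0 = gA * gK + gE * gA * gD + gE * gR"
  assume "\<not> ?thesis"
  hence ls: "l > s" unfolding s_def by simp
  have spos: "s > 0" unfolding s_def using pos by linarith
  have c1pos: "c1 \<ge> 0" unfolding c1_def using pos by (intro add_nonneg_nonneg mult_nonneg_nonneg) auto
  have "c1 * s \<ge> c0"
  proof -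
    have "c1 * s - c0 = gA * (gK + gE) * s + gK * (s - gA) + gE * (gR + gD) * s - gE * gA * gD
       + gD * gA * s + gR * (s - gE)"
      unfolding c1_def c0_def by (simp add: algebra_simps)
    also have "\<dots> \<ge> 0"
    proof -
      have a1: "gA * (gK + gE) * s \<ge> 0" using pos spos by simp
      have a2: "gK * (s - gA) \<ge> 0" using pos unfolding s_def by simp
      have a3: "gE * (gR + gD) * s - gE * gA * gD \<ge> 0"
      proof -
        have "gE * gD * gA \<le> gE * (gR + gD) * s"
          using pos unfolding s_def by (intro mult_mono) (auto intro: mult_nonneg_nonneg)
        thus ?thesis by (simp add: algebra_simps)
      qed
      have a4: "gD * gA * s \<ge> 0" using pos spos by simp
      have a5: "gR * (s - gE) \<ge> 0" using pos unfolding s_def by simp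
      show ?thesis using a1 a2 a3 a4 a5 by linarith
    qed
    finally show ?thesis by simp
  qed
  moreover have "c1 * l \<ge> c1 * s" using c1pos ls by (intro mult_left_mono) auto
  moreover have "l^2 * (l - s) > 0" using ls spos by (intro mult_pos_pos) auto
  moreover have "l ^ 3 - s * l ^ 2 + c1 * l - c0 = 0" using eq unfolding s_def c1_def c0_def .
  moreover have "l ^ 3 - s * l ^ 2 = l^2 * (l - s)" by (simp add: algebra_simps power3_eq_cube power2_eq_square)
  ultimately show False by linarith
qed



lemma tr_dot: "x \<bullet> ((A::real^'n^'m) *v y) = (transpose A *v x) \<bullet> y"
  by (metis dot_lmul_matrix transpose_matrix_vector)

lemma cubic_expand:
  fixes l A R D K E :: real
  shows "l^3 - (A + (R + D) + (K + E)) * l^2 + (A*(K+E) + K + E*(R+D) + D*A + R)*l - (A*K + E*A*D + E*R)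
     = (l-A)*(l-D)*(l-E) - (l-1)*(R*(l-E) + K*(l-A))"
  by (simp add: algebra_simps power3_eq_cube power2_eq_square)

lemma cubic_alg:
  fixes l A Rr D Kk E W2 Z beta nu mu uu vv :: real
  assumes W2: "W2 > 0" and Z: "Z > 0"
    and h1: "(A - l) * beta = vv" and h2: "vv = Rr * W2"
    and h3: "mu = (l - 1) * beta / W2 + l - D"
    and h4: "mu * nu = uu" and h5: "uu = Kk * Z" and h6: "(l - 1) * nu = Z * (l - E)"
  shows "(l-A)*(l-D)*(l-E) - (l-1)*(Rr*(l-E) + Kk*(l-A)) = 0"
proof -
  have "(l - 1) * Kk * Z = mu * Z * (l - E)"
  proof -
    have "(l - 1) * Kk * Z = (l - 1) * uu" using h5 by simp
    also have "\<dots> = mu * ((l - 1) * nu)" using h4 by (simp add: algebra_simps)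
    also have "\<dots> = mu * Z * (l - E)" using h6 by simp
    finally show ?thesis .
  qed
  hence "((l - 1) * Kk) * Z = (mu * (l - E)) * Z" by (simp add: algebra_simps)
  hence k: "(l - 1) * Kk = mu * (l - E)" using Z by simp
  have m: "mu * (A - l) = (l - 1) * Rr + (l - D) * (A - l)"
  proof -
    have "mu * (A - l) = (l - 1) * ((A - l) * beta) / W2 + (l - D) * (A - l)"
      unfolding h3 using W2 by (simp add: field_simps)
    also have "\<dots> = (l - 1) * Rr + (l - D) * (A - l)" using h1 h2 W2 by simp
    finally show ?thesis .
  qed
  have "(l - 1) * Kk * (A - l) = ((l - 1) * Rr + (l - D) * (A - l)) * (l - E)"
    using k m by (metis mult.commute mult.left_commute)
  thus ?thesis by (simp add: algebra_simps)
qed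



declare transpose_matrix_vector[simp del]

lemma rq_mult: "w \<noteq> 0 \<Longrightarrow> w \<bullet> (M *v w) = rq M w * (w \<bullet> w)"
  unfolding rq_def by simp

lemma core:
  fixes Ab :: "real^'n^'n" and R :: "real^'n^'m" and Db :: "real^'m^'m" and K :: "real^'m^'p"
    and Eb :: "real^'p^'p" and l amin amax rmin dmax smax emin xmax :: real
    and xb :: "real^'n" and yb :: "real^'m" and zb :: "real^'p"
  assumes Ab: "spd Ab" and Db: "spsd Db" and Eb: "spd Eb"
    and hA: "\<And>w. w \<noteq> 0 \<Longrightarrow> amin \<le> rq Ab w \<and> rq Ab w \<le> amax"
    and hR: "\<And>w. w \<noteq> 0 \<Longrightarrow> rmin \<le> rq (R ** transpose R) w" and rmin: "rmin > 0"
    and hD: "\<And>w. w \<noteq> 0 \<Longrightarrow> rq Db w \<le> dmax"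
    and hS: "\<And>w. w \<noteq> 0 \<Longrightarrow> rq (R ** transpose R) w + rq Db w \<le> smax"
    and hE: "\<And>w. w \<noteq> 0 \<Longrightarrow> emin \<le> rq Eb w"
    and hX: "\<And>w. w \<noteq> 0 \<Longrightarrow> rq (K ** transpose K) w + rq Eb w \<le> xmax"
    and one: "amin \<le> 1" "1 \<le> amax"
    and e1: "Ab *v xb - l *\<^sub>R xb = (l - 1) *\<^sub>R (transpose R *v yb)"
    and e2: "R *v xb - Db *v yb + l *\<^sub>R yb = (l - 1) *\<^sub>R (transpose K *v zb)"
    and e3: "K *v yb + Eb *v zb = l *\<^sub>R zb"
    and nz: "xb \<noteq> 0 \<or> yb \<noteq> 0 \<or> zb \<noteq> 0"
    and out: "l \<notin> {min amin (rmin / (amax + rmin + dmax)) .. amax + smax}"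
  shows "(\<exists>w1 w2 w3. w1 \<noteq> 0 \<and> w2 \<noteq> 0 \<and> w3 \<noteq> 0 \<and>
           (let gA = rq Ab w1; gR = rq (R ** transpose R) w2; gD = rq Db w2;
                gK = rq (K ** transpose K) w3; gE = rq Eb w3;
                gS = gR + gD; gX = gK + gE
            in l ^ 3 - (gA + gS + gX) * l ^ 2
               + (gA * gX + gK + gE * gS + gD * gA + gR) * l
               - (gA * gK + gE * gA * gD + gE * gR) = 0))
       \<and> min emin (min amin (rmin / (amax + rmin + dmax))) \<le> l
       \<and> l \<le> amax + smax + xmax"
proof -
  have RRv: "(R ** transpose R) *v w = R *v (transpose R *v w)" for w by (simp add: matrix_vector_mul_assoc)
  have KKv: "(K ** transpose K) *v w = K *v (transpose K *v w)" for w by (simp add: matrix_vector_mul_assoc)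
  have rqRR: "rq (R ** transpose R) w * (w \<bullet> w) = (transpose R *v w) \<bullet> (transpose R *v w)" if "w \<noteq> 0" for w
    using rq_mult[OF that, of "R ** transpose R"] by (simp add: RRv tr_dot)
  have rqKK: "rq (K ** transpose K) w * (w \<bullet> w) = (transpose K *v w) \<bullet> (transpose K *v w)" if "w \<noteq> 0" for w
    using rq_mult[OF that, of "K ** transpose K"] by (simp add: KKv tr_dot)
  have Apos: "rq Ab w > 0" if "w \<noteq> 0" for w using spd_pos[OF Ab that] that unfolding rq_def by simp
  have Dnn: "rq Db w \<ge> 0" for w using Db unfolding spsd_def rq_def by simp
  have Epos: "rq Eb w > 0" if "w \<noteq> 0" for w using spd_pos[OF Eb that] that unfolding rq_def by simp
  have Rpos: "rq (R ** transpose R) w > 0" if "w \<noteq> 0" for w using hR[OF that] rmin by linarith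
  have Knn: "rq (K ** transpose K) w \<ge> 0" for w
  proof (cases "w = 0")
    case True thus ?thesis unfolding rq_def by simp
  next
    case False
    have "rq (K ** transpose K) w * (w \<bullet> w) \<ge> 0" using rqKK[OF False] by simp
    moreover have "w \<bullet> w > 0" using False by simp
    ultimately show ?thesis by (simp add: zero_le_mult_iff)
  qed
  have symA: "sym_mat Ab" using Ab spd_sym by blast
  have symD: "sym_mat Db" using Db unfolding spsd_def by blast
  have RTinj: "transpose R *v w \<noteq> 0" if "w \<noteq> 0" for w
    using rqRR[OF that] Rpos[OF that] that by auto
  obtain w0 :: "real^'m" where w0: "w0 \<noteq> 0" using ex_nz_vec by blast
  obtain w0' :: "real^'p" where w0': "w0' \<noteq> 0" using ex_nz_vec by blast
  obtain w0'' :: "real^'n" where w0'': "w0'' \<noteq> 0" using ex_nz_vec by blast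
  have smax: "smax > 0" using hS[OF w0] Rpos[OF w0] Dnn[of w0] by linarith
  have xmax: "xmax > 0" using hX[OF w0'] Knn[of w0'] Epos[OF w0'] by linarith
  have amax_ge: "amin \<le> amax" using one by linarith
  have cases: "l > amax + smax \<or> (l < amin \<and> l < rmin / (amax + rmin + dmax))"
    using out by auto
  define hi where "hi \<longleftrightarrow> l > amax + smax"
  have lo: "\<not> hi \<Longrightarrow> l < amin \<and> l < rmin / (amax + rmin + dmax)" using cases hi_def by auto
  define T where "T = Ab - l *\<^sub>R mat 1"
  have Tv: "T *v x = Ab *v x - l *\<^sub>R x" for x
    unfolding T_def by (simp add: matrix_vector_mult_diff_rdistrib scaleR_matrix_vector_assoc[symmetric])
  have symT: "sym_mat T"
  proof (rule sym_matI)
    fix x y :: "real^'n"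
    have "x \<bullet> (T *v y) = x \<bullet> (Ab *v y) - l * (x \<bullet> y)" by (simp add: Tv inner_diff_right)
    also have "x \<bullet> (Ab *v y) = (Ab *v x) \<bullet> y" by (rule sym_dot[OF symA])
    also have "(Ab *v x) \<bullet> y - l * (x \<bullet> y) = (T *v x) \<bullet> y" by (simp add: Tv inner_diff_left)
    finally show "x \<bullet> (T *v y) = (T *v x) \<bullet> y" .
  qed
  have rqT: "rq T w = rq Ab w - l" if "w \<noteq> 0" for w
    using that unfolding rq_def by (simp add: Tv inner_diff_right field_simps)
  have Tdef_hi: "w \<bullet> (T *v w) < 0" if "hi" "w \<noteq> 0" for w
  proof -
    have "rq T w < 0" using rqT[OF that(2)] hA[OF that(2)] that(1) smax unfolding hi_def by linarith
    thus ?thesis using rq_mult[OF that(2), of T] that(2) by (simp add: mult_neg_pos)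
  qed
  have Tdef_lo: "w \<bullet> (T *v w) > 0" if "\<not> hi" "w \<noteq> 0" for w
  proof -
    have "rq T w > 0" using rqT[OF that(2)] hA[OF that(2)] lo[OF that(1)] by linarith
    thus ?thesis using rq_mult[OF that(2), of T] that(2) by simp
  qed
  have Tdef: "(\<forall>w. w \<noteq> 0 \<longrightarrow> w \<bullet> (T *v w) > 0) \<or> (\<forall>w. w \<noteq> 0 \<longrightarrow> w \<bullet> (T *v w) < 0)"
    using Tdef_hi Tdef_lo by blast
  have invT: "invertible T" using definite_recip(1)[OF symT Tdef] .
  define Ti where "Ti = matrix_inv T"
  have TTi: "T *v (Ti *v x) = x" "Ti *v (T *v x) = x" for x unfolding Ti_def using minv_mv[OF invT] by auto
  have symTi: "sym_mat Ti"
  proof (rule sym_matI)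
    fix x y :: "real^'n"
    have "x \<bullet> (Ti *v y) = (T *v (Ti *v x)) \<bullet> (Ti *v y)" using TTi by simp
    also have "\<dots> = (Ti *v x) \<bullet> (T *v (Ti *v y))" using sym_dot[OF symT] by simp
    also have "\<dots> = (Ti *v x) \<bullet> y" using TTi by simp
    finally show "x \<bullet> (Ti *v y) = (Ti *v x) \<bullet> y" .
  qed
  have xb_eq: "xb = (l - 1) *\<^sub>R (Ti *v (transpose R *v yb))"
  proof -
    have "T *v xb = (l - 1) *\<^sub>R (transpose R *v yb)" using e1 Tv by simp
    hence "Ti *v (T *v xb) = (l - 1) *\<^sub>R (Ti *v (transpose R *v yb))" by (simp add: matrix_vector_mult_scaleR)
    thus ?thesis using TTi by simp
  qed
  define M where "M = (l - 1) *\<^sub>R (R ** Ti ** transpose R) + l *\<^sub>R mat 1 - Db"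
  have Mv: "M *v y = (l - 1) *\<^sub>R (R *v (Ti *v (transpose R *v y))) + l *\<^sub>R y - Db *v y" for y
    unfolding M_def
    by (simp add: matrix_vector_mult_diff_rdistrib matrix_vector_mult_add_rdistrib
        scaleR_matrix_vector_assoc[symmetric] matrix_vector_mul_assoc[symmetric])
  have Mquad: "x \<bullet> (M *v y) = (l - 1) * ((transpose R *v x) \<bullet> (Ti *v (transpose R *v y))) + l * (x \<bullet> y) - x \<bullet> (Db *v y)" for x y
    by (simp add: Mv inner_diff_right inner_add_right tr_dot)
  have symM: "sym_mat M"
  proof (rule sym_matI)
    fix x y :: "real^'m"
    have a: "(transpose R *v x) \<bullet> (Ti *v (transpose R *v y)) = (transpose R *v y) \<bullet> (Ti *v (transpose R *v x))"
      using sym_dot[OF symTi, of "transpose R *v x" "transpose R *v y"] by (simp only: inner_commute)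
    have b: "x \<bullet> (Db *v y) = y \<bullet> (Db *v x)"
      using sym_dot[OF symD, of x y] by (simp only: inner_commute)
    have c: "x \<bullet> y = y \<bullet> x" by (rule inner_commute)
    have "x \<bullet> (M *v y) = y \<bullet> (M *v x)" unfolding Mquad a b c ..
    thus "x \<bullet> (M *v y) = (M *v x) \<bullet> y" by (simp only: inner_commute)
  qed
  have Myb: "M *v yb = (l - 1) *\<^sub>R (transpose K *v zb)"
    using e2 xb_eq by (simp add: Mv matrix_vector_mult_scaleR algebra_simps)
  have Mdef_hi: "w \<bullet> (M *v w) > 0" if "hi" "w \<noteq> 0" for w
  proof -
    define v where "v = transpose R *v w"
    define gR where "gR = rq (R ** transpose R) w"
    define gD where "gD = rq Db w"
    have ww: "w \<bullet> w > 0" using that(2) by simp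
    have vv: "v \<bullet> v = gR * (w \<bullet> w)" unfolding v_def gR_def using rqRR[OF that(2)] by simp
    have N: "spd (- T)" using neg_spd[OF symT] Tdef_hi[OF that(1)] by blast
    have lam: "l - amax > 0" using that(1) smax unfolding hi_def by linarith
    have lbN: "l - amax \<le> rq (- T) w'" if "w' \<noteq> 0" for w'
      using rqT[OF that] hA[OF that] unfolding rq_def by (simp add: neg_mv field_simps)
    have "v \<bullet> (matrix_inv (- T) *v v) \<le> (v \<bullet> v) / (l - amax)"
      by (rule inv_quad_upper[OF N lam lbN])
    hence b: "v \<bullet> (Ti *v v) \<ge> - ((v \<bullet> v) / (l - amax))"
      unfolding Ti_def by (simp add: minv_neg[OF invT] neg_mv)
    have l1: "l - 1 \<ge> 0" using lam one by linarith
    have q1: "w \<bullet> (M *v w) = (l - 1) * (v \<bullet> (Ti *v v)) + l * (w \<bullet> w) - gD * (w \<bullet> w)"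
      unfolding v_def gD_def using Mquad[of w w] rq_mult[OF that(2), of Db] by simp
    have q2: "(l - 1) * (- ((v \<bullet> v) / (l - amax))) \<le> (l - 1) * (v \<bullet> (Ti *v v))"
      using mult_left_mono[OF b l1] .
    have q3: "(l - 1) * (- ((v \<bullet> v) / (l - amax))) + l * (w \<bullet> w) - gD * (w \<bullet> w)
        = (w \<bullet> w) * (l - gD - (l - 1) * gR / (l - amax))"
      unfolding vv using lam by (simp add: field_simps)
    have q4: "(w \<bullet> w) * (l - gD - (l - 1) * gR / (l - amax)) > 0"
    proof (rule mult_pos_pos[OF ww], rule hi_ineq)
      show "amax + smax < l" using that(1) unfolding hi_def .
      show "gR + gD \<le> smax" unfolding gR_def gD_def using hS[OF that(2)] .
      show "1 \<le> amax" using one by simp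
      show "0 \<le> gR" using Rpos[OF that(2)] unfolding gR_def by simp
      show "0 \<le> gD" using Dnn unfolding gD_def by simp
    qed
    show ?thesis using q1 q2 q3 q4 by linarith
  qed
  have Mdef_lo: "w \<bullet> (M *v w) < 0" if "\<not> hi" "w \<noteq> 0" for w
  proof -
    define v where "v = transpose R *v w"
    define gR where "gR = rq (R ** transpose R) w"
    define gD where "gD = rq Db w"
    have ww: "w \<bullet> w > 0" using that(2) by simp
    have vv: "v \<bullet> v = gR * (w \<bullet> w)" unfolding v_def gR_def using rqRR[OF that(2)] by simp
    have N: "spd T" using symT Tdef_lo[OF that(1)] unfolding spd_def by blast
    have lo': "l < amin" "l < rmin / (amax + rmin + dmax)" using lo[OF that(1)] by auto
    have lam: "amax - l > 0" using lo' one by linarith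
    have ubN: "rq T w' \<le> amax - l" if "w' \<noteq> 0" for w'
      using rqT[OF that] hA[OF that] by simp
    have b: "(v \<bullet> v) / (amax - l) \<le> v \<bullet> (Ti *v v)"
      unfolding Ti_def by (rule inv_quad_lower[OF N lam ubN])
    have l1: "1 - l > 0" using lo' one by linarith
    have q1: "w \<bullet> (M *v w) = (l - 1) * (v \<bullet> (Ti *v v)) + l * (w \<bullet> w) - gD * (w \<bullet> w)"
      unfolding v_def gD_def using Mquad[of w w] rq_mult[OF that(2), of Db] by simp
    have q2: "(l - 1) * (v \<bullet> (Ti *v v)) \<le> (l - 1) * ((v \<bullet> v) / (amax - l))"
      using mult_left_mono_neg[OF b] l1 by simp
    have q3: "(l - 1) * ((v \<bullet> v) / (amax - l)) + l * (w \<bullet> w) - gD * (w \<bullet> w)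
        = (w \<bullet> w) * (l - gD - (1 - l) * gR / (amax - l))"
      unfolding vv using lam by (simp add: field_simps)
    have q4: "(w \<bullet> w) * (l - gD - (1 - l) * gR / (amax - l)) < 0"
    proof (rule mult_pos_neg[OF ww], rule lo_ineq)
      show "l < rmin / (amax + rmin + dmax)" using lo' by simp
      show "l < amax" using lam by simp
      show "1 \<le> amax" using one by simp
      show "rmin \<le> gR" unfolding gR_def using hR[OF that(2)] .
      show "0 < rmin" using rmin .
      show "0 \<le> gD" using Dnn unfolding gD_def by simp
      show "gD \<le> dmax" unfolding gD_def using hD[OF that(2)] .
    qed
    show ?thesis using q1 q2 q3 q4 by linarith
  qed
  have Mdef: "(\<forall>w. w \<noteq> 0 \<longrightarrow> w \<bullet> (M *v w) > 0) \<or> (\<forall>w. w \<noteq> 0 \<longrightarrow> w \<bullet> (M *v w) < 0)"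
    using Mdef_hi Mdef_lo by blast
  have invM: "invertible M" using definite_recip(1)[OF symM Mdef] .
  define Mi where "Mi = matrix_inv M"
  have MMi: "M *v (Mi *v x) = x" "Mi *v (M *v x) = x" for x unfolding Mi_def using minv_mv[OF invM] by auto
  define u where "u = transpose K *v zb"
  have yb_eq: "yb = (l - 1) *\<^sub>R (Mi *v u)"
  proof -
    have "Mi *v (M *v yb) = (l - 1) *\<^sub>R (Mi *v u)" using Myb unfolding u_def by (simp add: matrix_vector_mult_scaleR)
    thus ?thesis using MMi by simp
  qed
  have zbnz: "zb \<noteq> 0"
  proof
    assume "zb = 0"
    hence "yb = 0" using yb_eq unfolding u_def by simp
    moreover hence "xb = 0" using xb_eq by simp
    ultimately show False using nz \<open>zb = 0\<close> by simp
  qed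
  define gE where "gE = rq Eb zb"
  define gK where "gK = rq (K ** transpose K) zb"
  define nu where "nu = u \<bullet> (Mi *v u)"
  have zz: "zb \<bullet> zb > 0" using zbnz by simp
  have uu: "u \<bullet> u = gK * (zb \<bullet> zb)" unfolding u_def gK_def using rqKK[OF zbnz] by simp
  have key: "(l - 1) * nu = (zb \<bullet> zb) * (l - gE)"
  proof -
    have "zb \<bullet> (K *v yb) + zb \<bullet> (Eb *v zb) = l * (zb \<bullet> zb)"
      using arg_cong[OF e3, of "\<lambda>t. zb \<bullet> t"] by (simp add: inner_add_right)
    moreover have "zb \<bullet> (K *v yb) = (l - 1) * nu"
    proof -
      have "zb \<bullet> (K *v yb) = u \<bullet> yb" unfolding u_def by (rule tr_dot)
      also have "\<dots> = u \<bullet> ((l - 1) *\<^sub>R (Mi *v u))" using yb_eq by simp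
      also have "\<dots> = (l - 1) * nu" unfolding nu_def by (rule inner_scaleR_right)
      finally show ?thesis .
    qed
    moreover have "zb \<bullet> (Eb *v zb) = gE * (zb \<bullet> zb)" unfolding gE_def by (rule rq_mult[OF zbnz])
    ultimately show ?thesis by (simp add: algebra_simps)
  qed
  have cub: "\<exists>w1 w2. w1 \<noteq> 0 \<and> w2 \<noteq> 0 \<and>
     (l - rq Ab w1)*(l - rq Db w2)*(l - gE) - (l-1)*(rq (R ** transpose R) w2 * (l - gE) + gK * (l - rq Ab w1)) = 0"
  proof (cases "u = 0")
    case True
    hence "gK = 0" using uu zz by simp
    moreover have "l = gE" using key True zz unfolding nu_def by simp
    ultimately show ?thesis using w0 w0'' by auto
  next
    case False
    obtain w2 where w2: "w2 \<noteq> 0" "rq M w2 * nu = u \<bullet> u"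
      using definite_recip(2)[OF symM Mdef False] unfolding nu_def Mi_def by blast
    define v where "v = transpose R *v w2"
    have vnz: "v \<noteq> 0" unfolding v_def using RTinj[OF w2(1)] .
    obtain w1 where w1: "w1 \<noteq> 0" "rq T w1 * (v \<bullet> (Ti *v v)) = v \<bullet> v"
      using definite_recip(2)[OF symT Tdef vnz] unfolding Ti_def by blast
    have W2: "w2 \<bullet> w2 > 0" using w2 by simp
    have "(l-rq Ab w1)*(l-rq Db w2)*(l-gE) - (l-1)*(rq (R ** transpose R) w2*(l-gE) + gK*(l-rq Ab w1)) = 0"
    proof (rule cubic_alg[OF W2 zz])
      show "(rq Ab w1 - l) * (v \<bullet> (Ti *v v)) = v \<bullet> v" using w1 rqT[OF w1(1)] by simp
      show "v \<bullet> v = rq (R ** transpose R) w2 * (w2 \<bullet> w2)" unfolding v_def using rqRR[OF w2(1)] by simp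
      show "rq M w2 = (l - 1) * (v \<bullet> (Ti *v v)) / (w2 \<bullet> w2) + l - rq Db w2"
      proof -
        have "rq M w2 = ((l - 1) * (v \<bullet> (Ti *v v)) + l * (w2 \<bullet> w2) - w2 \<bullet> (Db *v w2)) / (w2 \<bullet> w2)"
          unfolding rq_def v_def using Mquad[of w2 w2] by simp
        also have "\<dots> = (l - 1) * (v \<bullet> (Ti *v v)) / (w2 \<bullet> w2) + l - rq Db w2"
          unfolding rq_def using W2 by (simp add: diff_divide_distrib add_divide_distrib)
        finally show ?thesis .
      qed
      show "rq M w2 * nu = u \<bullet> u" using w2(2) .
      show "u \<bullet> u = gK * (zb \<bullet> zb)" using uu .
      show "(l - 1) * nu = (zb \<bullet> zb) * (l - gE)" using key .
    qed
    thus ?thesis using w1(1) w2(1) by blast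
  qed
  then obtain w1 w2 where w12: "w1 \<noteq> 0" "w2 \<noteq> 0"
    "(l - rq Ab w1)*(l - rq Db w2)*(l - gE) - (l-1)*(rq (R ** transpose R) w2 * (l - gE) + gK * (l - rq Ab w1)) = 0"
    by blast
  have poly: "l^3 - (rq Ab w1 + (rq (R ** transpose R) w2 + rq Db w2) + (gK + gE)) * l^2
      + (rq Ab w1*(gK+gE) + gK + gE*(rq (R ** transpose R) w2 + rq Db w2) + rq Db w2*rq Ab w1 + rq (R ** transpose R) w2)*l
      - (rq Ab w1*gK + gE*rq Ab w1*rq Db w2 + gE*rq (R ** transpose R) w2) = 0"
    unfolding cubic_expand using w12(3) .
  have ex: "\<exists>w1 w2 w3. w1 \<noteq> 0 \<and> w2 \<noteq> 0 \<and> w3 \<noteq> 0 \<and>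
           (let gA = rq Ab w1; gR = rq (R ** transpose R) w2; gD = rq Db w2;
                gK = rq (K ** transpose K) w3; gE = rq Eb w3;
                gS = gR + gD; gX = gK + gE
            in l ^ 3 - (gA + gS + gX) * l ^ 2
               + (gA * gX + gK + gE * gS + gD * gA + gR) * l
               - (gA * gK + gE * gA * gD + gE * gR) = 0)"
    unfolding Let_def using w12(1,2) zbnz poly unfolding gK_def gE_def by blast
  have bounds: "min emin (min amin (rmin / (amax + rmin + dmax))) \<le> l \<and> l \<le> amax + smax + xmax"
  proof (cases hi)
    case True
    have up: "l \<le> rq Ab w1 + (rq (R ** transpose R) w2 + rq Db w2) + (gK + gE)"
      by (rule cubic_upper[OF Apos[OF w12(1)] _ Dnn _ _ poly])
        (use Rpos[OF w12(2)] Knn Epos[OF zbnz] in \<open>auto simp: gK_def gE_def\<close>)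
    have "rq Ab w1 \<le> amax" using hA[OF w12(1)] by simp
    moreover have "rq (R ** transpose R) w2 + rq Db w2 \<le> smax" using hS[OF w12(2)] .
    moreover have "gK + gE \<le> xmax" unfolding gK_def gE_def using hX[OF zbnz] .
    ultimately have "l \<le> amax + smax + xmax" using up by linarith
    moreover have "min emin (min amin (rmin / (amax + rmin + dmax))) \<le> l"
      using True one smax unfolding hi_def by linarith
    ultimately show ?thesis by blast
  next
    case False
    have lo': "l < amin" using lo[OF False] by simp
    have nu: "nu \<le> 0"
    proof (cases "u = 0")
      case True thus ?thesis unfolding nu_def by simp
    next
      case uf: False
      define y' where "y' = Mi *v u"
      have My: "M *v y' = u" unfolding y'_def using MMi by simp
      hence "y' \<noteq> 0" using uf by auto
      hence "y' \<bullet> (M *v y') < 0" using Mdef_lo[OF False] by blast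
      thus ?thesis unfolding nu_def using My y'_def by (simp add: inner_commute)
    qed
    have "(l - 1) * nu \<ge> 0" using nu lo' one by (intro mult_nonpos_nonpos) auto
    hence "(zb \<bullet> zb) * (l - gE) \<ge> 0" using key by simp
    hence "l - gE \<ge> 0" using zz by (simp add: zero_le_mult_iff)
    moreover have "emin \<le> gE" unfolding gE_def using hE[OF zbnz] .
    ultimately have "min emin (min amin (rmin / (amax + rmin + dmax))) \<le> l" by linarith
    moreover have "l \<le> amax + smax + xmax" using lo' one smax xmax by linarith
    ultimately show ?thesis by blast
  qed
  show ?thesis using ex bounds by blast
qed



lemma sum_plus_univ:
  "(\<Sum>j\<in>(UNIV::('a::finite + 'b::finite) set). g j) = (\<Sum>a\<in>UNIV. g (Inl a)) + (\<Sum>b\<in>UNIV. g (Inr b))"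
  using sum.Plus[of "UNIV::'a set" "UNIV::'b set" g] by (simp add: comp_def)

definition bx :: "real^(('n::finite+'m::finite)+'p::finite) \<Rightarrow> real^'n" where "bx v = (\<chi> b. v $ Inl (Inl b))"
definition byy :: "real^(('n::finite+'m::finite)+'p::finite) \<Rightarrow> real^'m" where "byy v = (\<chi> b. v $ Inl (Inr b))"
definition bz :: "real^(('n::finite+'m::finite)+'p::finite) \<Rightarrow> real^'p" where "bz v = (\<chi> b. v $ Inr b)"

lemma block_mv:
  fixes M11 :: "real^'n^'n" and M12 :: "real^'m^'n" and M13 :: "real^'p^'n"
    and M21 :: "real^'n^'m" and M22 :: "real^'m^'m" and M23 :: "real^'p^'m"
    and M31 :: "real^'n^'p" and M32 :: "real^'m^'p" and M33 :: "real^'p^'p"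
  shows "(block3 M11 M12 M13 M21 M22 M23 M31 M32 M33 *v v) $ Inl (Inl a) = (M11 *v bx v + M12 *v byy v + M13 *v bz v) $ a"
    "(block3 M11 M12 M13 M21 M22 M23 M31 M32 M33 *v v) $ Inl (Inr b) = (M21 *v bx v + M22 *v byy v + M23 *v bz v) $ b"
    "(block3 M11 M12 M13 M21 M22 M23 M31 M32 M33 *v v) $ Inr c = (M31 *v bx v + M32 *v byy v + M33 *v bz v) $ c"
  by (simp_all add: block3_def matrix_vector_mult_def sum_plus_univ bx_def byy_def bz_def)

lemma block_nz: "v \<noteq> 0 \<Longrightarrow> bx v \<noteq> 0 \<or> byy v \<noteq> 0 \<or> bz v \<noteq> 0"
proof (rule ccontr)
  assume "v \<noteq> 0" "\<not> (bx v \<noteq> 0 \<or> byy v \<noteq> 0 \<or> bz v \<noteq> 0)"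
  hence "bx v = 0" "byy v = 0" "bz v = 0" by auto
  hence z: "\<And>a. v $ Inl (Inl a) = 0" "\<And>b. v $ Inl (Inr b) = 0" "\<And>c. v $ Inr c = 0"
    by (auto simp: bx_def byy_def bz_def vec_eq_iff)
  have "v $ i = 0" for i
  proof (cases i)
    case (Inl a) thus ?thesis using z by (cases a) auto
  next
    case (Inr c) thus ?thesis using z by auto
  qed
  thus False using \<open>v \<noteq> 0\<close> by (simp add: vec_eq_iff)
qed

lemma block_eq:
  fixes M11 :: "real^'n^'n" and M12 :: "real^'m^'n" and M13 :: "real^'p^'n"
    and M21 :: "real^'n^'m" and M22 :: "real^'m^'m" and M23 :: "real^'p^'m"
    and M31 :: "real^'n^'p" and M32 :: "real^'m^'p" and M33 :: "real^'p^'p"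
    and N11 :: "real^'n^'n" and N12 :: "real^'m^'n" and N13 :: "real^'p^'n"
    and N21 :: "real^'n^'m" and N22 :: "real^'m^'m" and N23 :: "real^'p^'m"
    and N31 :: "real^'n^'p" and N32 :: "real^'m^'p" and N33 :: "real^'p^'p"
  assumes "block3 M11 M12 M13 M21 M22 M23 M31 M32 M33 *v v = c *\<^sub>R (block3 N11 N12 N13 N21 N22 N23 N31 N32 N33 *v v)"
  shows "M11 *v bx v + M12 *v byy v + M13 *v bz v = c *\<^sub>R (N11 *v bx v + N12 *v byy v + N13 *v bz v)"
    "M21 *v bx v + M22 *v byy v + M23 *v bz v = c *\<^sub>R (N21 *v bx v + N22 *v byy v + N23 *v bz v)"
    "M31 *v bx v + M32 *v byy v + M33 *v bz v = c *\<^sub>R (N31 *v bx v + N32 *v byy v + N33 *v bz v)"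
proof -
  have h: "\<And>i. (block3 M11 M12 M13 M21 M22 M23 M31 M32 M33 *v v) $ i = c * (block3 N11 N12 N13 N21 N22 N23 N31 N32 N33 *v v) $ i"
    using assms by (simp add: vec_eq_iff)
  show "M11 *v bx v + M12 *v byy v + M13 *v bz v = c *\<^sub>R (N11 *v bx v + N12 *v byy v + N13 *v bz v)"
    using h[of "Inl (Inl _)"] by (simp add: vec_eq_iff block_mv)
  show "M21 *v bx v + M22 *v byy v + M23 *v bz v = c *\<^sub>R (N21 *v bx v + N22 *v byy v + N23 *v bz v)"
    using h[of "Inl (Inr _)"] by (simp add: vec_eq_iff block_mv)
  show "M31 *v bx v + M32 *v byy v + M33 *v bz v = c *\<^sub>R (N31 *v bx v + N32 *v byy v + N33 *v bz v)"
    using h[of "Inr _"] by (simp add: vec_eq_iff block_mv)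
qed



lemma sim_eigs:
  fixes H G :: "real^'n^'n"
  assumes H: "spd H"
  shows "real_eigs (matrix_inv H ** G) = real_eigs (inv_sqrt H ** G ** inv_sqrt H)"
proof -
  define S where "S = inv_sqrt H"
  note P = inv_sqrt_props[OF H, folded S_def]
  have SS: "matrix_inv H = S ** S" using P(4) by simp
  have Si: "S *v (matrix_inv S *v x) = x" "matrix_inv S *v (S *v x) = x" for x using minv_mv[OF P(3)] by auto
  show ?thesis unfolding S_def[symmetric]
  proof
    show "real_eigs (matrix_inv H ** G) \<subseteq> real_eigs (S ** G ** S)"
    proof
      fix l assume "l \<in> real_eigs (matrix_inv H ** G)"
      then obtain v where v: "v \<noteq> 0" "(S ** S ** G) *v v = l *\<^sub>R v" unfolding real_eigs_def SS by blast
      define w where "w = matrix_inv S *v v"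
      have "w \<noteq> 0" using v(1) Si unfolding w_def by (metis matrix_vector_mult_0_right)
      moreover have "(S ** G ** S) *v w = l *\<^sub>R w"
      proof -
        have "(S ** G ** S) *v w = S *v (G *v v)" unfolding w_def by (simp add: matrix_vector_mul_assoc[symmetric] Si)
        also have "\<dots> = matrix_inv S *v (S *v (S *v (G *v v)))" using Si by simp
        also have "\<dots> = matrix_inv S *v (l *\<^sub>R v)" using v(2) by (simp add: matrix_vector_mul_assoc[symmetric])
        also have "\<dots> = l *\<^sub>R w" unfolding w_def by (simp add: matrix_vector_mult_scaleR)
        finally show ?thesis .
      qed
      ultimately show "l \<in> real_eigs (S ** G ** S)" unfolding real_eigs_def by blast
    qed
  next
    show "real_eigs (S ** G ** S) \<subseteq> real_eigs (matrix_inv H ** G)"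
    proof
      fix l assume "l \<in> real_eigs (S ** G ** S)"
      then obtain w where w: "w \<noteq> 0" "(S ** G ** S) *v w = l *\<^sub>R w" unfolding real_eigs_def by blast
      define v where "v = S *v w"
      have "v \<noteq> 0" using w(1) Si unfolding v_def by (metis matrix_vector_mult_0_right)
      moreover have "(S ** S ** G) *v v = l *\<^sub>R v"
      proof -
        have "(S ** S ** G) *v v = S *v ((S ** G ** S) *v w)" unfolding v_def by (simp add: matrix_vector_mul_assoc[symmetric])
        also have "\<dots> = l *\<^sub>R v" unfolding v_def using w(2) by (simp add: matrix_vector_mult_scaleR)
        finally show ?thesis .
      qed
      ultimately show "l \<in> real_eigs (matrix_inv H ** G)" unfolding real_eigs_def SS by blast
    qed
  qed
qed

lemma cong_sym:
  fixes G S :: "real^'n^'n"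
  assumes "sym_mat G" "sym_mat S"
  shows "sym_mat (S ** G ** S)"
proof (rule sym_matI)
  fix x y :: "real^'n"
  have "x \<bullet> ((S ** G ** S) *v y) = x \<bullet> (S *v (G *v (S *v y)))" by (simp add: matrix_vector_mul_assoc matrix_mul_assoc)
  also have "\<dots> = (S *v x) \<bullet> (G *v (S *v y))" by (rule sym_dot[OF assms(2)])
  also have "\<dots> = (G *v (S *v x)) \<bullet> (S *v y)" by (rule sym_dot[OF assms(1)])
  also have "\<dots> = (S *v (G *v (S *v x))) \<bullet> y" by (metis inner_commute sym_dot[OF assms(2)])
  also have "\<dots> = ((S ** G ** S) *v x) \<bullet> y" by (simp add: matrix_vector_mul_assoc matrix_mul_assoc)
  finally show "x \<bullet> ((S ** G ** S) *v y) = ((S ** G ** S) *v x) \<bullet> y" .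
qed

lemma cong_quad:
  fixes G S :: "real^'n^'n"
  assumes "sym_mat S"
  shows "w \<bullet> ((S ** G ** S) *v w) = (S *v w) \<bullet> (G *v (S *v w))"
  using sym_dot[OF assms, of w "G *v (S *v w)"] by (simp add: matrix_vector_mul_assoc matrix_mul_assoc)

lemma cong_spd:
  fixes G S :: "real^'n^'n"
  assumes G: "spd G" and S: "sym_mat S" "invertible S"
  shows "spd (S ** G ** S)"
  unfolding spd_def
proof safe
  show "sym_mat (S ** G ** S)" using cong_sym spd_sym G S by blast
  fix x :: "real^'n" assume x: "x \<noteq> 0"
  have "S *v x \<noteq> 0" using x minv_mv(2)[OF S(2), of x] by (metis matrix_vector_mult_0_right)
  thus "0 < x \<bullet> ((S ** G ** S) *v x)" unfolding cong_quad[OF S(1)] using spd_pos[OF G] by blast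
qed

lemma cong_spsd:
  fixes G S :: "real^'n^'n"
  assumes G: "spsd G" and S: "sym_mat S"
  shows "spsd (S ** G ** S)"
  using G cong_sym[OF _ S, of G] unfolding spsd_def cong_quad[OF S] by blast

lemma rq_add: "rq (X + Y) w = rq X w + rq Y w"
  unfolding rq_def by (simp add: matrix_vector_mult_add_rdistrib inner_add_right add_divide_distrib)

lemma sym_add: "sym_mat X \<Longrightarrow> sym_mat Y \<Longrightarrow> sym_mat (X + Y)"
  unfolding sym_mat_def by (simp add: transpose_def vec_eq_iff)

lemma sym_AAt: "sym_mat ((R::real^'n^'m) ** transpose R)"
  unfolding sym_mat_def by (simp add: matrix_transpose_mul)

lemma transpose_cong:
  fixes S :: "real^'m^'m" and B :: "real^'n^'m" and S' :: "real^'n^'n"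
  assumes "sym_mat S" "sym_mat S'"
  shows "transpose (S ** B ** S') = S' ** transpose B ** S"
  using assms unfolding sym_mat_def by (simp add: matrix_transpose_mul matrix_mul_assoc)

lemma schur_cong:
  fixes Ss :: "real^'m^'m" and D :: "real^'m^'m" and B :: "real^'n^'m" and Sa :: "real^'n^'n"
  assumes "sym_mat Ss" "sym_mat Sa"
  shows "Ss ** (D + B ** (Sa ** Sa) ** transpose B) ** Ss
       = Ss ** D ** Ss + (Ss ** B ** Sa) ** transpose (Ss ** B ** Sa)"
  unfolding transpose_cong[OF assms]
  by (simp add: matrix_eq matrix_vector_mul_assoc[symmetric] matrix_vector_mult_add_rdistrib
      matrix_vector_right_distrib)



declare transpose_matrix_vector[simp del]

lemma lam_sim:
  fixes H G :: "real^'n^'n"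
  assumes "spd H"
  shows "lam_min (matrix_inv H ** G) = lam_min (inv_sqrt H ** G ** inv_sqrt H)"
    "lam_max (matrix_inv H ** G) = lam_max (inv_sqrt H ** G ** inv_sqrt H)"
  unfolding lam_min_def lam_max_def sim_eigs[OF assms] by auto

lemma inv_nz: "invertible (S::real^'n^'n) \<Longrightarrow> x \<noteq> 0 \<Longrightarrow> S *v x \<noteq> 0"
  by (metis matrix_vector_mult_0_right minv_mv(2))

theorem theorem2:
  fixes A Ahat :: "real^'n^'n" and B :: "real^'n^'m" and C :: "real^'m^'p"
    and D Shat :: "real^'m^'m" and E Xhat :: "real^'p^'p" and lambda :: real
  assumes dims: "CARD('n) \<ge> CARD('m)" "CARD('n) \<ge> CARD('p)"
    and A: "spd A" and E: "spd E"
    and B: "rank B = CARD('m)"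
    and C: "rank C = min CARD('p) CARD('m)"
    and D: "spsd D"
    and hats: "spd Ahat" "spd Shat" "spd Xhat"
  defines "calA \<equiv> block3 A (transpose B) 0 B (- D) (transpose C) 0 C E"
    and "calP \<equiv> block3 Ahat (transpose B) 0 0 (- Shat) (transpose C) 0 0 Xhat"
    and "Abar \<equiv> inv_sqrt Ahat ** A ** inv_sqrt Ahat"
    and "Dbar \<equiv> inv_sqrt Shat ** D ** inv_sqrt Shat"
    and "Ebar \<equiv> inv_sqrt Xhat ** E ** inv_sqrt Xhat"
    and "R \<equiv> inv_sqrt Shat ** B ** inv_sqrt Ahat"
    and "K \<equiv> inv_sqrt Xhat ** C ** inv_sqrt Shat"
    and "gAmin \<equiv> lam_min (matrix_inv Ahat ** A)"
    and "gAmax \<equiv> lam_max (matrix_inv Ahat ** A)"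
    and "gSmax \<equiv> lam_max (matrix_inv Shat ** (D + B ** matrix_inv Ahat ** transpose B))"
    and "gXmax \<equiv> lam_max (matrix_inv Xhat ** (E + C ** matrix_inv Shat ** transpose C))"
    and "gDmax \<equiv> lam_max (matrix_inv Shat ** D)"
    and "gEmin \<equiv> lam_min (matrix_inv Xhat ** E)"
    and "gRmin \<equiv> lam_min ((inv_sqrt Shat ** B ** inv_sqrt Ahat) ** transpose (inv_sqrt Shat ** B ** inv_sqrt Ahat))"
  assumes one: "gAmin \<le> 1" "1 \<le> gAmax"
    and eig: "lambda \<in> real_eigs (calA ** matrix_inv calP)"
    and out: "lambda \<notin> {min gAmin (gRmin / (gAmax + gRmin + gDmax)) .. gAmax + gSmax}"
  shows "(\<exists>(w1::real^'n) (w2::real^'m) (w3::real^'p). w1 \<noteq> 0 \<and> w2 \<noteq> 0 \<and> w3 \<noteq> 0 \<and>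
           (let gA = rq Abar w1; gR = rq (R ** transpose R) w2; gD = rq Dbar w2;
                gK = rq (K ** transpose K) w3; gE = rq Ebar w3;
                gS = gR + gD; gX = gK + gE
            in lambda ^ 3 - (gA + gS + gX) * lambda ^ 2
               + (gA * gX + gK + gE * gS + gD * gA + gR) * lambda
               - (gA * gK + gE * gA * gD + gE * gR) = 0))
       \<and> min gEmin (min gAmin (gRmin / (gAmax + gRmin + gDmax))) \<le> lambda
       \<and> lambda \<le> gAmax + gSmax + gXmax"
proof -
  define Sa where "Sa = inv_sqrt Ahat"
  define Ss where "Ss = inv_sqrt Shat"
  define Sx where "Sx = inv_sqrt Xhat"
  note PA = inv_sqrt_props[OF hats(1), folded Sa_def]
  note PS = inv_sqrt_props[OF hats(2), folded Ss_def]
  note PX = inv_sqrt_props[OF hats(3), folded Sx_def]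
  have Abar': "Abar = Sa ** A ** Sa" unfolding Abar_def Sa_def ..
  have Dbar': "Dbar = Ss ** D ** Ss" unfolding Dbar_def Ss_def ..
  have Ebar': "Ebar = Sx ** E ** Sx" unfolding Ebar_def Sx_def ..
  have R': "R = Ss ** B ** Sa" unfolding R_def Ss_def Sa_def ..
  have K': "K = Sx ** C ** Ss" unfolding K_def Sx_def Ss_def ..
  have RT: "transpose R = Sa ** transpose B ** Ss" unfolding R' by (rule transpose_cong[OF PS(2) PA(2)])
  have KT: "transpose K = Ss ** transpose C ** Sx" unfolding K' by (rule transpose_cong[OF PX(2) PS(2)])
  have spdAb: "spd Abar" unfolding Abar' by (rule cong_spd[OF A PA(2) PA(3)])
  have spsdDb: "spsd Dbar" unfolding Dbar' by (rule cong_spsd[OF D PS(2)])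
  have spdEb: "spd Ebar" unfolding Ebar' by (rule cong_spd[OF E PX(2) PX(3)])
  have symDb: "sym_mat Dbar" using spsdDb unfolding spsd_def by blast
  have symEb: "sym_mat Ebar" using spdEb spd_sym by blast
  have gAmin': "gAmin = lam_min Abar" unfolding gAmin_def Abar_def by (rule lam_sim[OF hats(1)])
  have gAmax': "gAmax = lam_max Abar" unfolding gAmax_def Abar_def by (rule lam_sim[OF hats(1)])
  have gRmin': "gRmin = lam_min (R ** transpose R)" unfolding gRmin_def R_def ..
  have gDmax': "gDmax = lam_max Dbar" unfolding gDmax_def Dbar_def by (rule lam_sim[OF hats(2)])
  have gEmin': "gEmin = lam_min Ebar" unfolding gEmin_def Ebar_def by (rule lam_sim[OF hats(3)])
  have gSmax': "gSmax = lam_max (Dbar + R ** transpose R)"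
  proof -
    have "gSmax = lam_max (Ss ** (D + B ** matrix_inv Ahat ** transpose B) ** Ss)"
      unfolding gSmax_def Ss_def by (rule lam_sim[OF hats(2)])
    also have "Ss ** (D + B ** matrix_inv Ahat ** transpose B) ** Ss = Dbar + R ** transpose R"
      unfolding PA(4)[symmetric] Dbar' R' by (rule schur_cong[OF PS(2) PA(2)])
    finally show ?thesis .
  qed
  have gXmax': "gXmax = lam_max (Ebar + K ** transpose K)"
  proof -
    have "gXmax = lam_max (Sx ** (E + C ** matrix_inv Shat ** transpose C) ** Sx)"
      unfolding gXmax_def Sx_def by (rule lam_sim[OF hats(3)])
    also have "Sx ** (E + C ** matrix_inv Shat ** transpose C) ** Sx = Ebar + K ** transpose K"
      unfolding PS(4)[symmetric] Ebar' K' by (rule schur_cong[OF PX(2) PS(2)])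
    finally show ?thesis .
  qed
  have hA: "\<And>w. w \<noteq> 0 \<Longrightarrow> gAmin \<le> rq Abar w \<and> rq Abar w \<le> gAmax"
    unfolding gAmin' gAmax' using rq_bounds[OF spd_sym[OF spdAb]] by blast
  have hR: "\<And>w. w \<noteq> 0 \<Longrightarrow> gRmin \<le> rq (R ** transpose R) w"
    unfolding gRmin' using rq_bounds[OF sym_AAt] by blast
  have hD: "\<And>w. w \<noteq> 0 \<Longrightarrow> rq Dbar w \<le> gDmax"
    unfolding gDmax' using rq_bounds[OF symDb] by blast
  have hS: "\<And>w. w \<noteq> 0 \<Longrightarrow> rq (R ** transpose R) w + rq Dbar w \<le> gSmax"
    unfolding gSmax' using rq_bounds(2)[OF sym_add[OF symDb sym_AAt]] by (simp add: rq_add add.commute)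
  have hE: "\<And>w. w \<noteq> 0 \<Longrightarrow> gEmin \<le> rq Ebar w"
    unfolding gEmin' using rq_bounds[OF symEb] by blast
  have hX: "\<And>w. w \<noteq> 0 \<Longrightarrow> rq (K ** transpose K) w + rq Ebar w \<le> gXmax"
    unfolding gXmax' using rq_bounds(2)[OF sym_add[OF symEb sym_AAt]] by (simp add: rq_add add.commute)
  have BTinj: "transpose B *v x \<noteq> 0" if "x \<noteq> 0" for x
  proof -
    have "rank (transpose B) = CARD('m)" using B by (simp add: rank_transpose)
    thus ?thesis using matrix_nonfull_linear_equations_eq[of "transpose B"] that by blast
  qed
  have rmin: "gRmin > 0"
  proof -
    have "gRmin \<in> real_eigs (R ** transpose R)"
      unfolding gRmin' lam_min_def using sym_eigs_fin[OF sym_AAt] by (rule Min_in)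
    then obtain v where v: "v \<noteq> 0" "rq (R ** transpose R) v = gRmin" using eig_rq by blast
    have "transpose R *v v \<noteq> 0" unfolding RT
      using inv_nz[OF PA(3) BTinj[OF inv_nz[OF PS(3) v(1)]]] by (simp add: matrix_vector_mul_assoc[symmetric])
    hence "(transpose R *v v) \<bullet> (transpose R *v v) > 0" by simp
    moreover have "v \<bullet> ((R ** transpose R) *v v) = (transpose R *v v) \<bullet> (transpose R *v v)"
      by (simp add: matrix_vector_mul_assoc[symmetric] tr_dot)
    moreover have "v \<bullet> v > 0" using v(1) by simp
    ultimately show ?thesis using v(2) unfolding rq_def by (metis divide_pos_pos)
  qed
  obtain u where u: "u \<noteq> 0" "(calA ** matrix_inv calP) *v u = lambda *\<^sub>R u"
    using eig unfolding real_eigs_def by blast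
  have invP: "invertible calP"
  proof (rule inj_invertible)
    fix v assume v0: "calP *v v = 0"
    have "calP *v v = 1 *\<^sub>R (calP *v v)" by simp
    hence "calP *v v = 0 *\<^sub>R (block3 Ahat (transpose B) 0 0 (- Shat) (transpose C) 0 0 Xhat *v v)"
      using v0 by simp
    note bq = block_eq[OF this[unfolded calP_def]]
    have z: "bz v = 0" using bq(3) spd_mv_zero[OF hats(3)] by simp
    have y: "byy v = 0" using bq(2) z spd_mv_zero[OF hats(2)] by (simp add: neg_mv)
    have x: "bx v = 0" using bq(1) z y spd_mv_zero[OF hats(1)] by simp
    show "v = 0" using block_nz x y z by blast
  qed
  define v where "v = matrix_inv calP *v u"
  have Pv: "calP *v v = u" unfolding v_def using minv_mv[OF invP] by simp
  have vnz: "v \<noteq> 0" using Pv u(1) by auto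
  have Av: "calA *v v = lambda *\<^sub>R (calP *v v)"
    using u(2) Pv unfolding v_def by (simp add: matrix_vector_mul_assoc[symmetric])
  note bq = block_eq[OF Av[unfolded calA_def calP_def]]
  define x where "x = bx v"
  define y where "y = byy v"
  define z where "z = bz v"
  have E1: "A *v x + transpose B *v y = lambda *\<^sub>R (Ahat *v x + transpose B *v y)"
    using bq(1) unfolding x_def y_def z_def by simp
  have E2: "B *v x - D *v y + transpose C *v z = lambda *\<^sub>R (transpose C *v z - Shat *v y)"
    using bq(2) unfolding x_def y_def z_def by (simp add: neg_mv)
  have E3: "C *v y + E *v z = lambda *\<^sub>R (Xhat *v z)"
    using bq(3) unfolding x_def y_def z_def by simp
  have xyz: "x \<noteq> 0 \<or> y \<noteq> 0 \<or> z \<noteq> 0" using block_nz[OF vnz] unfolding x_def y_def z_def .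
  define xb where "xb = matrix_inv Sa *v x"
  define yb where "yb = matrix_inv Ss *v y"
  define zb where "zb = matrix_inv Sx *v z"
  have x': "x = Sa *v xb" unfolding xb_def using minv_mv(1)[OF PA(3)] by simp
  have y': "y = Ss *v yb" unfolding yb_def using minv_mv(1)[OF PS(3)] by simp
  have z': "z = Sx *v zb" unfolding zb_def using minv_mv(1)[OF PX(3)] by simp
  have idA: "Sa *v (Ahat *v (Sa *v w)) = w" for w using PA(5) by (simp add: matrix_vector_mul_assoc matrix_mul_assoc)
  have idS: "Ss *v (Shat *v (Ss *v w)) = w" for w using PS(5) by (simp add: matrix_vector_mul_assoc matrix_mul_assoc)
  have idX: "Sx *v (Xhat *v (Sx *v w)) = w" for w using PX(5) by (simp add: matrix_vector_mul_assoc matrix_mul_assoc)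
  have e1: "Abar *v xb - lambda *\<^sub>R xb = (lambda - 1) *\<^sub>R (transpose R *v yb)"
  proof -
    have "Sa *v (A *v x + transpose B *v y) = Sa *v (lambda *\<^sub>R (Ahat *v x + transpose B *v y))"
      using E1 by simp
    hence "Abar *v xb + transpose R *v yb = lambda *\<^sub>R xb + lambda *\<^sub>R (transpose R *v yb)"
      unfolding Abar' RT x' y'
      by (simp add: matrix_vector_mul_assoc[symmetric] matrix_vector_right_distrib
          matrix_vector_mult_scaleR idA scaleR_add_right)
    thus ?thesis by (simp add: algebra_simps)
  qed
  have e2: "R *v xb - Dbar *v yb + lambda *\<^sub>R yb = (lambda - 1) *\<^sub>R (transpose K *v zb)"
  proof -
    have "Ss *v (B *v x - D *v y + transpose C *v z) = Ss *v (lambda *\<^sub>R (transpose C *v z - Shat *v y))"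
      using E2 by simp
    hence "R *v xb - Dbar *v yb + transpose K *v zb = lambda *\<^sub>R (transpose K *v zb) - lambda *\<^sub>R yb"
      unfolding R' Dbar' KT x' y' z'
      by (simp add: matrix_vector_mul_assoc[symmetric] matrix_vector_right_distrib
          matrix_vector_mult_diff_distrib matrix_vector_mult_scaleR idS scaleR_diff_right)
    thus ?thesis by (simp add: algebra_simps)
  qed
  have e3: "K *v yb + Ebar *v zb = lambda *\<^sub>R zb"
  proof -
    have "Sx *v (C *v y + E *v z) = Sx *v (lambda *\<^sub>R (Xhat *v z))"
      using E3 by simp
    thus ?thesis
      unfolding K' Ebar' y' z'
      by (simp add: matrix_vector_mul_assoc[symmetric] matrix_vector_right_distrib
          matrix_vector_mult_scaleR idX scaleR_add_right)
  qed
  have nzb: "xb \<noteq> 0 \<or> yb \<noteq> 0 \<or> zb \<noteq> 0" using xyz unfolding x' y' z' by auto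
  show ?thesis
    by (rule core[OF spdAb spsdDb spdEb hA hR rmin hD hS hE hX one e1 e2 e3 nzb out])
qed


end
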